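(* Let $h>0$, $K>0$, $g\in C^1(\mathbb{R}_+,\mathbb{R}_+)$ with $g(0)=0$, $g(K)=K$ and $g'(0+)=p>1$, and let $\psi$ be a nonnegative solution of $x'(t)=-x(t)+g(x(t-h))$ on $\mathbb{R}$ with $\psi(-\infty)=0$, $\psi(+\infty)=K$. Let $\lambda$ be the positive root of $z=-1+pe^{-zh}$. If the finite limit $g''(0+)$ exists, then for each $\delta>0$ there is $t_0\in\mathbb{R}$ such that, as $t\to-\infty$, $$\psi(t-t_0)=e^{\lambda t}+O(e^{(2\lambda-\delta)t}),\qquad \psi'(t-t_0)=\lambda e^{\lambda t}+O(e^{(2\lambda-\delta)t}),$$ and hence $\psi'>0$ on some semi-axis $(-\infty,T]$. Moreover, if $g''$ exists and is bounded on $[0,\epsilon)$ for some $\epsilon>0$, then such a solution $\psi$ is unique up to a translation in $t$. *)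

theory Defs
  imports "HOL-Analysis.Analysis" "HOL-Library.Landau_Symbols"
begin

definition connecting_solution ::
  "(real \<Rightarrow> real) \<Rightarrow> real \<Rightarrow> real \<Rightarrow> (real \<Rightarrow> real) \<Rightarrow> bool" where
  "connecting_solution g h K \<psi> \<longleftrightarrow>
     (\<forall>t. \<psi> t \<ge> 0) \<and>
     (\<forall>t. (\<psi> has_real_derivative (- \<psi> t + g (\<psi> (t - h)))) (at t)) \<and>
     (\<psi> \<longlongrightarrow> 0) at_bot \<and>
     (\<psi> \<longlongrightarrow> K) at_top"

end

theory Submission
  imports Defs
begin

lemma global_antideriv:
  fixes u :: "real \<Rightarrow> real"
  assumes cu: "continuous_on UNIV u"
  shows "\<exists>U. \<forall>t. (U has_real_derivative u t) (at t)"
proof -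
  define U where "U x = integral {0..x} u - integral {x..0} u" for x
  have "(U has_real_derivative u t) (at t)" for t
  proof -
    define a where "a = min t 0 - 1"
    define b where "b = max t 0 + 1"
    have ab: "a < t" "t < b" "a < 0" "0 < b" by (auto simp: a_def b_def)
    have cab: "continuous_on {a..b} u" using cu continuous_on_subset by blast
    have int: "u integrable_on {a..b}" using cab integrable_continuous_real by blast
    have eq: "U x = integral {a..x} u - integral {a..0} u" if "x \<in> {a<..<b}" for x
    proof (cases "x \<ge> 0")
      case True
      have z: "integral {x..0} u = 0"
        using True by (cases "x = 0") auto
      have ix: "u integrable_on {a..x}" by (rule integrable_on_subinterval[OF int]) (use that in auto)
      have "integral {a..0} u + integral {0..x} u = integral {a..x} u"
        using Henstock_Kurzweil_Integration.integral_combine[of a 0 x u] that True ab ix by simp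
      with z show ?thesis unfolding U_def by linarith
    next
      case False
      have z: "integral {0..x} u = 0"
        using False by auto
      have ix: "u integrable_on {a..0}" by (rule integrable_on_subinterval[OF int]) (use ab in auto)
      have "integral {a..x} u + integral {x..0} u = integral {a..0} u"
        using Henstock_Kurzweil_Integration.integral_combine[of a x 0 u] that False ab ix by simp
      with z show ?thesis unfolding U_def by linarith
    qed
    have "((\<lambda>x. integral {a..x} u) has_real_derivative u t) (at t within {a..b})"
      by (rule integral_has_real_derivative[OF cab]) (use ab in auto)
    then have "((\<lambda>x. integral {a..x} u) has_real_derivative u t) (at t)"
      using at_within_Icc_at[OF ab(1,2)] by simp
    then have "((\<lambda>x. integral {a..x} u - integral {a..0} u) has_real_derivative u t) (at t)"
      by (auto intro!: derivative_eq_intros)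
    then show ?thesis
      by (rule has_field_derivative_transform_within_open[where S="{a<..<b}"])
         (use ab eq in auto)
  qed
  then show ?thesis by blast
qed


lemma fwd_uniq:
  fixes x y g :: "real \<Rightarrow> real"
  assumes h: "h > 0"
    and dx: "\<And>t. (x has_real_derivative (- x t + g (x (t - h)))) (at t)"
    and dy: "\<And>t. (y has_real_derivative (- y t + g (y (t - h)))) (at t)"
    and eqT: "\<And>t. t \<le> T \<Longrightarrow> x t = y t"
  shows "x t = y t"
proof -
  define d where "d \<tau> = (x \<tau> - y \<tau>) * exp \<tau>" for \<tau>
  have dd: "(d has_real_derivative ((g (x (\<tau> - h)) - g (y (\<tau> - h))) * exp \<tau>)) (at \<tau>)" for \<tau>
  proof -
    have "(d has_real_derivative ((- x \<tau> + g (x (\<tau> - h))) - (- y \<tau> + g (y (\<tau> - h)))) * exp \<tau>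
           + (x \<tau> - y \<tau>) * exp \<tau>) (at \<tau>)"
      unfolding d_def by (auto intro!: derivative_eq_intros dx dy)
    then show ?thesis by (simp add: algebra_simps)
  qed
  have main: "\<forall>t. t \<le> T + real n * h \<longrightarrow> x t = y t" for n
  proof (induction n)
    case 0
    then show ?case using eqT by simp
  next
    case (Suc n)
    show ?case
    proof (intro allI impI)
      fix t assume t: "t \<le> T + real (Suc n) * h"
      show "x t = y t"
      proof (cases "t \<le> T + real n * h")
        case True
        then show ?thesis using Suc by blast
      next
        case False
        define s0 where "s0 = T + real n * h"
        have st: "s0 < t" using False s0_def by simp
        have z: "DERIV d \<tau> :> 0" if "s0 < \<tau>" "\<tau> < t" for \<tau>
        proof -
          have "\<tau> - h \<le> T + real n * h" using that t by (simp add: algebra_simps)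
          then have "x (\<tau> - h) = y (\<tau> - h)" using Suc by blast
          then show ?thesis using dd[of \<tau>] by simp
        qed
        have cd: "continuous_on {s0..t} d"
          using dd by (meson DERIV_continuous continuous_at_imp_continuous_on)
        have "d t = d s0"
          by (rule DERIV_isconst2[OF st cd z]) (use st in auto)
        moreover have "d s0 = 0" using Suc s0_def d_def by simp
        ultimately show ?thesis by (simp add: d_def)
      qed
    qed
  qed
  obtain n :: nat where "(t - T) / h \<le> real n" using real_arch_simple by blast
  then have "t \<le> T + real n * h" using h by (simp add: field_simps)
  then show ?thesis using main by blast
qed


lemma kill_upper:
  fixes x \<rho> :: "real \<Rightarrow> real"
  assumes h: "h > 0" and mu: "\<mu> > 0"
    and dx: "\<And>t. t \<le> T \<Longrightarrow> (x has_real_derivative (- x t + p * x (t - h) + \<rho> t)) (at t)"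
    and rho: "\<And>t. t \<le> T \<Longrightarrow> \<bar>\<rho> t\<bar> \<le> \<eta> * \<bar>x (t - h)\<bar>"
    and S: "\<And>\<tau>. \<tau> \<le> T \<Longrightarrow> \<bar>x \<tau>\<bar> * exp (- \<mu> * \<tau>) \<le> S"
    and eta: "\<eta> \<ge> 0"
    and t: "t \<le> T"
  shows "x t * exp (- \<mu> * t) \<le> (\<bar>p\<bar> + \<eta>) * exp (- \<mu> * h) * S / (1 + \<mu>)"
proof -
  define b where "b = 1 + \<mu>"
  define k where "k = (\<bar>p\<bar> + \<eta>) * exp (- \<mu> * h)"
  have b: "b > 0" using mu b_def by simp
  have S0: "S \<ge> 0" using S[OF t] by (smt (verit) exp_gt_zero mult_nonneg_nonneg abs_ge_zero)
  have k0: "k \<ge> 0" using eta k_def by simp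
  define q where "q \<tau> = (x \<tau> * exp (- \<mu> * \<tau>) - k * S / b) * exp (b * \<tau>)" for \<tau>
  have qle: "q t \<le> q s" if s: "s \<le> t" for s
  proof (rule DERIV_nonpos_imp_nonincreasing[OF s])
    fix \<tau> assume \<tau>: "s \<le> \<tau>" "\<tau> \<le> t"
    then have \<tau>T: "\<tau> \<le> T" using t by simp
    have d: "(q has_real_derivative
       ((- x \<tau> + p * x (\<tau> - h) + \<rho> \<tau>) * exp (- \<mu> * \<tau>) + x \<tau> * (exp (- \<mu> * \<tau>) * (- \<mu>))) * exp (b * \<tau>)
       + (x \<tau> * exp (- \<mu> * \<tau>) - k * S / b) * (exp (b * \<tau>) * b)) (at \<tau>)"
      unfolding q_def by (auto intro!: derivative_eq_intros dx[OF \<tau>T])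
    have e1: "exp (- \<mu> * \<tau>) * exp (b * \<tau>) = exp \<tau>" unfolding b_def
      by (simp only: mult_exp_exp) (simp add: algebra_simps)
    have "((- x \<tau> + p * x (\<tau> - h) + \<rho> \<tau>) * exp (- \<mu> * \<tau>) + x \<tau> * (exp (- \<mu> * \<tau>) * (- \<mu>))) * exp (b * \<tau>)
       + (x \<tau> * exp (- \<mu> * \<tau>) - k * S / b) * (exp (b * \<tau>) * b)
       = ((p * x (\<tau> - h) + \<rho> \<tau>) * exp (- \<mu> * \<tau>) - k * S) * exp (b * \<tau>)"
      using b by (simp add: b_def field_simps)
    moreover have "(p * x (\<tau> - h) + \<rho> \<tau>) * exp (- \<mu> * \<tau>) \<le> k * S"
    proof -
      have "(p * x (\<tau> - h) + \<rho> \<tau>) * exp (- \<mu> * \<tau>) \<le> \<bar>p * x (\<tau> - h) + \<rho> \<tau>\<bar> * exp (- \<mu> * \<tau>)"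
        by simp
      also have "\<dots> \<le> (\<bar>p\<bar> + \<eta>) * \<bar>x (\<tau> - h)\<bar> * exp (- \<mu> * \<tau>)"
      proof (rule mult_right_mono)
        show "\<bar>p * x (\<tau> - h) + \<rho> \<tau>\<bar> \<le> (\<bar>p\<bar> + \<eta>) * \<bar>x (\<tau> - h)\<bar>"
        proof -
          have "\<bar>p * x (\<tau> - h) + \<rho> \<tau>\<bar> \<le> \<bar>p\<bar> * \<bar>x (\<tau> - h)\<bar> + \<bar>\<rho> \<tau>\<bar>"
            using abs_triangle_ineq[of "p * x (\<tau> - h)" "\<rho> \<tau>"] by (simp add: abs_mult)
          then show ?thesis using rho[OF \<tau>T] by (simp add: distrib_right)
        qed
      qed simp
      also have "\<dots> = (\<bar>p\<bar> + \<eta>) * exp (- \<mu> * h) * (\<bar>x (\<tau> - h)\<bar> * exp (- \<mu> * (\<tau> - h)))"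
      proof -
        have ee: "exp (- \<mu> * h) * exp (- \<mu> * (\<tau> - h)) = exp (- \<mu> * \<tau>)"
          by (simp only: mult_exp_exp) (simp add: algebra_simps)
        show ?thesis by (simp only: ee[symmetric]) (simp only: mult_ac)
      qed
      also have "\<dots> \<le> k * S"
        unfolding k_def by (rule mult_left_mono) (use S[of "\<tau> - h"] \<tau>T h eta in auto)
      finally show ?thesis .
    qed
    ultimately show "\<exists>y. DERIV q \<tau> :> y \<and> y \<le> 0"
      using d by (intro exI[of _ "((p * x (\<tau> - h) + \<rho> \<tau>) * exp (- \<mu> * \<tau>) - k * S) * exp (b * \<tau>)"])
        (auto simp: mult_nonpos_nonneg)
  qed
  show ?thesis
  proof (rule ccontr)
    assume "\<not> ?thesis"
    then have pos: "x t * exp (- \<mu> * t) - k * S / b > 0" unfolding k_def b_def by simp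
    define D where "D = q t"
    have D: "D > 0" unfolding D_def q_def using pos by simp
    define s where "s = min t ((ln D - ln (S + 1)) / b)"
    have st: "s \<le> t" by (simp add: s_def)
    have "s \<le> (ln D - ln (S + 1)) / b" by (simp add: s_def)
    then have "b * s \<le> ln D - ln (S + 1)" using b by (simp add: field_simps)
    then have "exp (b * s) \<le> exp (ln D - ln (S + 1))" by simp
    also have "\<dots> = D / (S + 1)" using D S0 by (simp add: exp_diff)
    finally have es: "exp (b * s) \<le> D / (S + 1)" .
    have "q s \<le> S * exp (b * s)"
    proof -
      have "x s * exp (- \<mu> * s) - k * S / b \<le> S"
        using S[of s] st t k0 S0 b by (smt (verit) abs_ge_self divide_nonneg_pos mult_right_mono exp_gt_zero mult_nonneg_nonneg)
      then show ?thesis unfolding q_def by (simp add: mult_right_mono)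
    qed
    also have "\<dots> \<le> S * (D / (S + 1))" using mult_left_mono[OF es S0] by simp
    also have "\<dots> < D" using S0 D by (simp add: field_simps)
    finally have "q s < q t" unfolding D_def .
    with qle[OF st] show False by simp
  qed
qed

lemma kill:
  fixes x \<rho> :: "real \<Rightarrow> real"
  assumes h: "h > 0" and mu: "\<mu> > 0"
    and dx: "\<And>t. t \<le> T \<Longrightarrow> (x has_real_derivative (- x t + p * x (t - h) + \<rho> t)) (at t)"
    and rho: "\<And>t. t \<le> T \<Longrightarrow> \<bar>\<rho> t\<bar> \<le> \<eta> * \<bar>x (t - h)\<bar>"
    and bnd: "\<And>t. t \<le> T \<Longrightarrow> \<bar>x t\<bar> \<le> C * exp (\<mu> * t)"
    and eta: "\<eta> \<ge> 0"
    and k: "(\<bar>p\<bar> + \<eta>) * exp (- \<mu> * h) < 1 + \<mu>"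
    and t: "t \<le> T"
  shows "x t = 0"
proof -
  define z where "z \<tau> = \<bar>x \<tau>\<bar> * exp (- \<mu> * \<tau>)" for \<tau>
  define S where "S = Sup (z ` {..T})"
  have zC: "z \<tau> \<le> C" if "\<tau> \<le> T" for \<tau>
  proof -
    have "z \<tau> \<le> C * exp (\<mu> * \<tau>) * exp (- \<mu> * \<tau>)"
      unfolding z_def by (rule mult_right_mono) (use bnd[OF that] in auto)
    also have "\<dots> = C" by (simp add: exp_minus_inverse mult.assoc)
    finally show ?thesis .
  qed
  have bdd: "bdd_above (z ` {..T})" using zC by (auto intro!: bdd_aboveI[of _ C])
  have zS: "z \<tau> \<le> S" if "\<tau> \<le> T" for \<tau>
    unfolding S_def by (rule cSUP_upper[OF _ bdd]) (use that in auto)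
  define k where "k = (\<bar>p\<bar> + \<eta>) * exp (- \<mu> * h) / (1 + \<mu>)"
  have k1: "k < 1" using k mu by (simp add: k_def)
  have up: "z \<tau> \<le> k * S" if "\<tau> \<le> T" for \<tau>
  proof -
    have a1: "x \<tau> * exp (- \<mu> * \<tau>) \<le> k * S"
      using kill_upper[OF h mu dx rho _ eta that, of S] zS unfolding z_def k_def by (simp add: field_simps)
    have dmx: "\<And>t. t \<le> T \<Longrightarrow> ((\<lambda>t. - x t) has_real_derivative (- (- x t) + p * (- x (t - h)) + (- \<rho> t))) (at t)"
      using dx by (auto intro!: derivative_eq_intros)
    have a2: "(- x \<tau>) * exp (- \<mu> * \<tau>) \<le> k * S"
    proof -
      have r2: "\<And>t. t \<le> T \<Longrightarrow> \<bar>- \<rho> t\<bar> \<le> \<eta> * \<bar>- x (t - h)\<bar>" using rho by simp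
      have s2: "\<And>t. t \<le> T \<Longrightarrow> \<bar>- x t\<bar> * exp (- \<mu> * t) \<le> S" using zS unfolding z_def by simp
      show ?thesis
        using kill_upper[where x="\<lambda>t. - x t" and \<rho>="\<lambda>t. - \<rho> t" and S=S, OF h mu dmx r2 s2 eta that]
        unfolding k_def by (simp add: field_simps)
    qed
    show ?thesis using a1 a2 unfolding z_def by (cases "x \<tau> \<ge> 0") auto
  qed
  have "S \<le> k * S"
    unfolding S_def by (rule cSUP_least) (use up in \<open>auto simp: S_def\<close>)
  moreover have "S \<ge> 0" using zS[of T] unfolding z_def by (smt (verit) exp_gt_zero mult_nonneg_nonneg abs_ge_zero)
  ultimately have "S = 0" using k1 by (smt (verit) mult_le_cancel_right1)
  then have "z t \<le> 0" using zS[OF t] by simp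
  then show ?thesis unfolding z_def by (simp add: mult_le_0_iff)
qed


lemma one_step_upper:
  fixes y f :: "real \<Rightarrow> real"
  assumes a: "a > 0" and h: "h > 0"
    and dy: "\<And>\<tau>. \<tau> \<in> {s..s+h} \<Longrightarrow> (y has_real_derivative (a * (y (\<tau> - h) - y \<tau>) + f \<tau>)) (at \<tau>)"
    and M: "\<And>\<tau>. \<tau> \<in> {s-h..s} \<Longrightarrow> y \<tau> \<le> M"
    and F: "\<And>\<tau>. \<tau> \<in> {s..s+h} \<Longrightarrow> f \<tau> \<le> \<Phi>"
    and Phi: "\<Phi> \<ge> 0"
    and \<tau>: "\<tau> \<in> {s..s+h}"
  shows "y \<tau> \<le> M + h * \<Phi> - exp (- a * h) * (M - y s)"
proof -
  define q where "q \<sigma> = (y \<sigma> - M - (\<sigma> - s) * \<Phi>) * exp (a * (\<sigma> - s))" for \<sigma>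
  have "q \<tau> \<le> q s"
  proof (rule DERIV_nonpos_imp_nonincreasing[of s \<tau> q])
    show "s \<le> \<tau>" using \<tau> by simp
  next
    fix \<sigma> assume \<sigma>: "s \<le> \<sigma>" "\<sigma> \<le> \<tau>"
    then have \<sigma>i: "\<sigma> \<in> {s..s+h}" using \<tau> by simp
    have d: "(q has_real_derivative
        ((a * (y (\<sigma> - h) - y \<sigma>) + f \<sigma>) - \<Phi>) * exp (a * (\<sigma> - s))
        + (y \<sigma> - M - (\<sigma> - s) * \<Phi>) * (exp (a * (\<sigma> - s)) * a)) (at \<sigma>)"
      unfolding q_def by (auto intro!: derivative_eq_intros dy[OF \<sigma>i])
    have "((a * (y (\<sigma> - h) - y \<sigma>) + f \<sigma>) - \<Phi>) + (y \<sigma> - M - (\<sigma> - s) * \<Phi>) * a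
        = a * (y (\<sigma> - h) - M) + (f \<sigma> - \<Phi>) - a * ((\<sigma> - s) * \<Phi>)"
      by (simp add: algebra_simps)
    also have "\<dots> \<le> 0"
    proof -
      have "y (\<sigma> - h) \<le> M" using M[of "\<sigma> - h"] \<sigma>i by simp
      then have "a * (y (\<sigma> - h) - M) \<le> 0" using a by (simp add: mult_nonneg_nonpos)
      moreover have "f \<sigma> - \<Phi> \<le> 0" using F[OF \<sigma>i] by simp
      moreover have "a * ((\<sigma> - s) * \<Phi>) \<ge> 0" using a \<sigma> Phi by simp
      ultimately show ?thesis by linarith
    qed
    finally have "(((a * (y (\<sigma> - h) - y \<sigma>) + f \<sigma>) - \<Phi>) + (y \<sigma> - M - (\<sigma> - s) * \<Phi>) * a) * exp (a * (\<sigma> - s)) \<le> 0"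
      by (simp add: mult_nonpos_nonneg)
    then show "\<exists>y. DERIV q \<sigma> :> y \<and> y \<le> 0"
      using d by (intro exI[of _ "((a * (y (\<sigma> - h) - y \<sigma>) + f \<sigma>) - \<Phi>) * exp (a * (\<sigma> - s))
        + (y \<sigma> - M - (\<sigma> - s) * \<Phi>) * (exp (a * (\<sigma> - s)) * a)"]) (simp add: algebra_simps)
  qed
  then have "(y \<tau> - M - (\<tau> - s) * \<Phi>) * exp (a * (\<tau> - s)) \<le> y s - M" unfolding q_def by simp
  then have A1: "(y \<tau> - M - (\<tau> - s) * \<Phi>) * exp (a * (\<tau> - s)) * exp (- a * (\<tau> - s)) \<le> (y s - M) * exp (- a * (\<tau> - s))"
    by (rule mult_right_mono) simp
  have A2: "exp (a * (\<tau> - s)) * exp (- a * (\<tau> - s)) = 1"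
    by (simp only: mult_exp_exp) simp
  have A3: "(y \<tau> - M - (\<tau> - s) * \<Phi>) * exp (a * (\<tau> - s)) * exp (- a * (\<tau> - s)) = y \<tau> - M - (\<tau> - s) * \<Phi>"
    by (simp only: mult.assoc A2) simp
  from A1 A3 have "y \<tau> - M - (\<tau> - s) * \<Phi> \<le> (y s - M) * exp (- a * (\<tau> - s))"
    by linarith
  also have "\<dots> \<le> (y s - M) * exp (- a * h)"
  proof (rule mult_left_mono_neg)
    show "y s - M \<le> 0" using M[of s] h by simp
    show "exp (- a * h) \<le> exp (- a * (\<tau> - s))" using \<tau> a by (simp add: mult_left_mono)
  qed
  finally show ?thesis using \<tau> Phi mult_right_mono[of "\<tau> - s" h \<Phi>] by (simp add: algebra_simps)
qed

lemma win_bdd: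
  fixes y :: "real \<Rightarrow> real"
  assumes "continuous_on UNIV y"
  shows "bdd_above (y ` {a..b})" "bdd_below (y ` {a..b})"
proof -
  have "compact (y ` {a..b})"
    by (rule compact_continuous_image[OF continuous_on_subset[OF assms] compact_Icc]) simp
  then have "bounded (y ` {a..b})" by (rule compact_imp_bounded)
  then show "bdd_above (y ` {a..b})" "bdd_below (y ` {a..b})"
    by (auto intro: bounded_imp_bdd_above bounded_imp_bdd_below)
qed

definition wmax :: "real \<Rightarrow> (real \<Rightarrow> real) \<Rightarrow> real \<Rightarrow> real" where
  "wmax h y t = Sup (y ` {t-h..t})"
definition wmin :: "real \<Rightarrow> (real \<Rightarrow> real) \<Rightarrow> real \<Rightarrow> real" where
  "wmin h y t = Inf (y ` {t-h..t})"

lemma wmax_ge: "continuous_on UNIV y \<Longrightarrow> \<tau> \<in> {t-h..t} \<Longrightarrow> y \<tau> \<le> wmax h y t"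
  unfolding wmax_def by (rule cSUP_upper[OF _ win_bdd(1)]) auto
lemma wmin_le: "continuous_on UNIV y \<Longrightarrow> \<tau> \<in> {t-h..t} \<Longrightarrow> wmin h y t \<le> y \<tau>"
  unfolding wmin_def by (rule cINF_lower[OF win_bdd(2)]) auto
lemma wmax_le: "h \<ge> 0 \<Longrightarrow> (\<And>\<tau>. \<tau> \<in> {t-h..t} \<Longrightarrow> y \<tau> \<le> B) \<Longrightarrow> wmax h y t \<le> B"
  unfolding wmax_def by (rule cSUP_least) auto
lemma wmin_ge: "h \<ge> 0 \<Longrightarrow> (\<And>\<tau>. \<tau> \<in> {t-h..t} \<Longrightarrow> B \<le> y \<tau>) \<Longrightarrow> B \<le> wmin h y t"
  unfolding wmin_def by (rule cINF_greatest) auto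

lemma osc_step:
  fixes y f :: "real \<Rightarrow> real"
  assumes a: "a > 0" and h: "h > 0" and cy: "continuous_on UNIV y"
    and dy: "\<And>\<tau>. \<tau> \<in> {s..s+h} \<Longrightarrow> (y has_real_derivative (a * (y (\<tau> - h) - y \<tau>) + f \<tau>)) (at \<tau>)"
    and F: "\<And>\<tau>. \<tau> \<in> {s..s+h} \<Longrightarrow> \<bar>f \<tau>\<bar> \<le> \<Phi>"
  shows "wmax h y (s+h) - wmin h y (s+h) \<le> (1 - exp (- a * h) / 2) * (wmax h y s - wmin h y s) + 2 * h * \<Phi>"
proof -
  define M where "M = wmax h y s"
  define m where "m = wmin h y s"
  have Phi: "\<Phi> \<ge> 0" using F[of s] h by (smt (verit) atLeastAtMost_iff abs_ge_zero)
  have yM: "\<And>\<tau>. \<tau> \<in> {s-h..s} \<Longrightarrow> y \<tau> \<le> M" unfolding M_def using wmax_ge[OF cy] by blast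
  have ym: "\<And>\<tau>. \<tau> \<in> {s-h..s} \<Longrightarrow> m \<le> y \<tau>" unfolding m_def using wmin_ge wmin_le[OF cy] by blast
  have up: "y \<tau> \<le> M + h * \<Phi> - exp (- a * h) * (M - y s)" if "\<tau> \<in> {s..s+h}" for \<tau>
    by (rule one_step_upper[OF a h dy yM _ Phi that]) (use F in \<open>auto simp: abs_le_iff\<close>)
  have lo: "m - h * \<Phi> + exp (- a * h) * (y s - m) \<le> y \<tau>" if "\<tau> \<in> {s..s+h}" for \<tau>
  proof -
    have dmy: "\<And>\<tau>. \<tau> \<in> {s..s+h} \<Longrightarrow> ((\<lambda>t. - y t) has_real_derivative (a * (- y (\<tau> - h) - - y \<tau>) + - f \<tau>)) (at \<tau>)"
      using dy by (auto intro!: derivative_eq_intros simp: algebra_simps)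
    have "- y \<tau> \<le> - m + h * \<Phi> - exp (- a * h) * (- m - - y s)"
      by (rule one_step_upper[where y="\<lambda>t. - y t", OF a h dmy _ _ Phi that]) (use ym F in \<open>auto simp: abs_le_iff\<close>)
    then show ?thesis by (simp add: algebra_simps)
  qed
  have e0: "exp (- a * h) \<ge> 0" by simp
  have mM: "m \<le> M" using yM[of s] ym[of s] h by simp
  show ?thesis
  proof (cases "y s \<le> (m + M) / 2")
    case True
    have "wmax h y (s+h) \<le> M + h * \<Phi> - exp (- a * h) * ((M - m) / 2)"
    proof (rule wmax_le)
      fix \<tau> assume "\<tau> \<in> {s + h - h..s + h}"
      then have "\<tau> \<in> {s..s+h}" by simp
      moreover have "exp (- a * h) * ((M - m) / 2) \<le> exp (- a * h) * (M - y s)"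
        using True by (intro mult_left_mono) auto
      ultimately show "y \<tau> \<le> M + h * \<Phi> - exp (- a * h) * ((M - m) / 2)" using up[of \<tau>] by linarith
    qed (use h in auto)
    moreover have "m - h * \<Phi> \<le> wmin h y (s+h)"
    proof (rule wmin_ge)
      fix \<tau> assume "\<tau> \<in> {s + h - h..s + h}"
      then have "\<tau> \<in> {s..s+h}" by simp
      moreover have "exp (- a * h) * (y s - m) \<ge> 0" using ym[of s] h by simp
      ultimately show "m - h * \<Phi> \<le> y \<tau>" using lo[of \<tau>] by linarith
    qed (use h in auto)
    ultimately show ?thesis unfolding M_def[symmetric] m_def[symmetric] by (simp add: algebra_simps)
  next
    case False
    have "wmax h y (s+h) \<le> M + h * \<Phi>"
    proof (rule wmax_le)
      fix \<tau> assume "\<tau> \<in> {s + h - h..s + h}"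
      then have "\<tau> \<in> {s..s+h}" by simp
      moreover have "exp (- a * h) * (M - y s) \<ge> 0" using yM[of s] h by simp
      ultimately show "y \<tau> \<le> M + h * \<Phi>" using up[of \<tau>] by linarith
    qed (use h in auto)
    moreover have "m - h * \<Phi> + exp (- a * h) * ((M - m) / 2) \<le> wmin h y (s+h)"
    proof (rule wmin_ge)
      fix \<tau> assume "\<tau> \<in> {s + h - h..s + h}"
      then have "\<tau> \<in> {s..s+h}" by simp
      moreover have "exp (- a * h) * ((M - m) / 2) \<le> exp (- a * h) * (y s - m)"
        using False by (intro mult_left_mono) auto
      ultimately show "m - h * \<Phi> + exp (- a * h) * ((M - m) / 2) \<le> y \<tau>" using lo[of \<tau>] by linarith
    qed (use h in auto)
    ultimately show ?thesis unfolding M_def[symmetric] m_def[symmetric] by (simp add: algebra_simps)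
  qed
qed


lemma back_seq:
  fixes oc :: "nat \<Rightarrow> real"
  assumes th: "0 < \<theta>" "\<theta> < 1" and q: "0 < q" "q \<le> 1" and D: "D \<ge> 0"
    and rec: "\<And>k. oc k \<le> \<theta> * oc (Suc k) + D * q ^ k"
    and bnd: "\<And>k. oc k \<le> B"
  shows "oc 0 \<le> D / (1 - \<theta> * q)"
proof (rule ccontr)
  define F where "F = D / (1 - \<theta> * q)"
  have "\<theta> * q \<le> \<theta> * 1" using mult_left_mono[OF q(2)] th by simp
  then have tq: "\<theta> * q < 1" using th by linarith
  have FD: "F * (1 - \<theta> * q) = D" using tq unfolding F_def by simp
  have F0: "F \<ge> 0" using D tq unfolding F_def by simp
  assume "\<not> oc 0 \<le> D / (1 - \<theta> * q)"
  then have E0: "oc 0 - F > 0" unfolding F_def by simp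
  define E where "E = oc 0 - F"
  have main: "oc j - F * q ^ j \<ge> E * (1 / \<theta>) ^ j" for j
  proof (induction j)
    case 0
    then show ?case by (simp add: E_def)
  next
    case (Suc j)
    have "oc (Suc j) \<ge> (oc j - D * q ^ j) / \<theta>" using rec[of j] th by (simp add: pos_divide_le_eq mult.commute)
    then have "oc (Suc j) - F * q ^ Suc j \<ge> (oc j - D * q ^ j) / \<theta> - F * q ^ Suc j" by simp
    also have "(oc j - D * q ^ j) / \<theta> - F * q ^ Suc j = (oc j - F * q ^ j) / \<theta>"
    proof -
      have FF: "F = D + F * (\<theta> * q)" using FD by (simp add: algebra_simps)
      have "F * q ^ j = (D + F * (\<theta> * q)) * q ^ j" using FF by metis
      then have "D * q ^ j = F * q ^ j - \<theta> * (F * q ^ Suc j)" by (simp add: algebra_simps)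
      then show ?thesis using th by (simp add: field_simps)
    qed
    also have "(oc j - F * q ^ j) / \<theta> \<ge> E * (1 / \<theta>) ^ j / \<theta>"
      using Suc th by (simp add: divide_right_mono)
    finally show ?case by (simp add: power_Suc2 divide_inverse mult_ac)
  qed
  obtain j where j: "B / E < (1 / \<theta>) ^ j" using real_arch_pow[of "1 / \<theta>" "B / E"] th by auto
  have "oc j \<ge> E * (1 / \<theta>) ^ j" proof -
    have "F * q ^ j \<ge> 0" using F0 q by simp
    then show ?thesis using main[of j] by linarith
  qed
  moreover have "E * (1 / \<theta>) ^ j > B" using j E0 unfolding E_def by (simp add: pos_divide_less_eq mult.commute)
  ultimately show False using bnd[of j] by simp
qed


lemma g_lip_ord:
  fixes g g' :: "real \<Rightarrow> real"
  assumes g_deriv: "\<And>x. x \<ge> 0 \<Longrightarrow> (g has_real_derivative g' x) (at x within {0..})"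
    and gb: "\<And>s. s \<in> {0..e} \<Longrightarrow> \<bar>g' s - p\<bar> \<le> B * s"
    and yx: "0 \<le> y" "y \<le> x" "x \<le> e" and B: "B \<ge> 0"
  shows "\<bar>g x - g y - p * (x - y)\<bar> \<le> B * x * (x - y)"
proof -
  define k where "k s = g s - p * s" for s
  have "\<exists>z\<in>{y..x}. k x - k y = (\<lambda>d. d * (g' z - p)) (x - y)"
  proof (rule mvt_very_simple[OF yx(2)])
    fix z assume z: "y \<le> z" "z \<le> x"
    have "(g has_real_derivative g' z) (at z within {y..x})"
      by (rule DERIV_subset[OF g_deriv]) (use z yx in auto)
    then have "(k has_real_derivative (g' z - p)) (at z within {y..x})"
      unfolding k_def by (auto intro!: derivative_eq_intros)
    then show "(k has_derivative (\<lambda>d. d * (g' z - p))) (at z within {y..x})"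
      by (simp add: has_field_derivative_def mult_commute_abs)
  qed
  then obtain z where z: "z \<in> {y..x}" "k x - k y = (x - y) * (g' z - p)" by auto
  have "\<bar>g' z - p\<bar> \<le> B * x"
    using gb[of z] z yx B by (smt (verit) atLeastAtMost_iff mult_left_mono)
  then have "\<bar>(x - y) * (g' z - p)\<bar> \<le> (x - y) * (B * x)"
    using yx by (simp add: abs_mult mult_left_mono)
  then show ?thesis using z unfolding k_def by (simp add: algebra_simps)
qed

lemma g_lip:
  fixes g g' :: "real \<Rightarrow> real"
  assumes g_deriv: "\<And>x. x \<ge> 0 \<Longrightarrow> (g has_real_derivative g' x) (at x within {0..})"
    and gb: "\<And>s. s \<in> {0..e} \<Longrightarrow> \<bar>g' s - p\<bar> \<le> B * s"
    and x: "x \<in> {0..e}" and y: "y \<in> {0..e}" and B: "B \<ge> 0"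
  shows "\<bar>g x - g y - p * (x - y)\<bar> \<le> B * max x y * \<bar>x - y\<bar>"
proof (cases "y \<le> x")
  case True
  then show ?thesis using g_lip_ord[where e=e, OF g_deriv gb, where x=x and y=y] x y B by simp
next
  case False
  then have "\<bar>g y - g x - p * (y - x)\<bar> \<le> B * y * (y - x)"
    using g_lip_ord[where e=e, OF g_deriv gb, where x=y and y=x] x y B by simp
  then show ?thesis using False by (simp add: abs_minus_commute algebra_simps max_def)
qed


lemma exp_small:
  fixes lam A \<epsilon> T :: real
  assumes lam: "lam > 0" and A: "A \<ge> 0" and eps: "\<epsilon> > 0"
  shows "\<exists>t\<le>T. A * exp (lam * t) < \<epsilon>"
proof -
  define t where "t = min T ((ln \<epsilon> - ln (A + 1)) / lam)"
  have "t \<le> (ln \<epsilon> - ln (A + 1)) / lam" by (simp add: t_def)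
  then have "lam * t \<le> ln \<epsilon> - ln (A + 1)" using lam by (simp add: field_simps)
  then have "exp (lam * t) \<le> exp (ln \<epsilon> - ln (A + 1))" by simp
  also have "\<dots> = \<epsilon> / (A + 1)" using eps A by (simp add: exp_diff)
  finally have E: "exp (lam * t) \<le> \<epsilon> / (A + 1)" .
  have "A * exp (lam * t) \<le> A * (\<epsilon> / (A + 1))" by (rule mult_left_mono[OF E A])
  also have "\<dots> < \<epsilon>" using A eps by (simp add: field_simps)
  finally show ?thesis by (intro exI[of _ t]) (simp add: t_def)
qed

locale dde =
  fixes g \<psi> :: "real \<Rightarrow> real" and h K p lam C e :: real
  assumes h: "h > 0" and K: "K > 0" and g_cont: "continuous_on {0..} g" and g0: "g 0 = 0"
    and sol: "connecting_solution g h K \<psi>"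
    and lam: "lam > 0" and lam_root: "lam = -1 + p * exp (- lam * h)"
    and e: "e > 0" and C: "C \<ge> 0" and gq: "\<And>x. x \<in> {0..e} \<Longrightarrow> \<bar>g x - p * x\<bar> \<le> C * x^2"
begin

lemma psi_nn: "\<psi> t \<ge> 0" using sol unfolding connecting_solution_def by blast
lemma dpsi: "(\<psi> has_real_derivative (- \<psi> t + g (\<psi> (t - h)))) (at t)"
  using sol unfolding connecting_solution_def by blast
lemma cpsi: "continuous_on UNIV \<psi>"
  using dpsi by (meson DERIV_continuous continuous_at_imp_continuous_on)
lemma psi_bot: "(\<psi> \<longlongrightarrow> 0) at_bot" using sol unfolding connecting_solution_def by blast
lemma psi_top: "(\<psi> \<longlongrightarrow> K) at_top" using sol unfolding connecting_solution_def by blast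

lemma small: assumes "\<epsilon> > 0" shows "\<exists>T. \<forall>t\<le>T. \<psi> t \<le> \<epsilon>"
proof -
  have "eventually (\<lambda>t. \<psi> t < \<epsilon>) at_bot" using order_tendstoD(2)[OF psi_bot assms] .
  then show ?thesis unfolding eventually_at_bot_linorder by (meson less_imp_le)
qed

lemma pe: "p * exp (- lam * h) = 1 + lam" using lam_root by simp
lemma p_pos: "p > 0"
proof -
  have "p * exp (- lam * h) > 0" using pe lam by simp
  then show ?thesis by (simp add: zero_less_mult_iff)
qed
lemma pe2: "p = (1 + lam) * exp (lam * h)"
proof -
  have e1: "exp (- lam * h) * exp (lam * h) = 1" by (simp only: mult_exp_exp) simp
  have "p = p * (exp (- lam * h) * exp (lam * h))" by (simp only: e1)
  also have "\<dots> = (p * exp (- lam * h)) * exp (lam * h)" by (simp only: mult.assoc)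
  also have "\<dots> = (1 + lam) * exp (lam * h)" by (simp only: pe)
  finally show ?thesis .
qed

definition u where "u t = \<psi> t * exp (- lam * t)"
definition f where "f t = (g (\<psi> (t - h)) - p * \<psi> (t - h)) * exp (- lam * t)"

lemma u_nn: "u t \<ge> 0" unfolding u_def using psi_nn by simp
lemma psi_u: "\<psi> t = u t * exp (lam * t)"
  unfolding u_def by (simp add: mult.assoc mult_exp_exp)

lemma du: "(u has_real_derivative ((1 + lam) * (u (t - h) - u t) + f t)) (at t)"
proof -
  have "(u has_real_derivative ((- \<psi> t + g (\<psi> (t - h))) * exp (- lam * t) + \<psi> t * (exp (- lam * t) * (- lam)))) (at t)"
    unfolding u_def by (auto intro!: derivative_eq_intros dpsi)
  moreover have "(- \<psi> t + g (\<psi> (t - h))) * exp (- lam * t) + \<psi> t * (exp (- lam * t) * (- lam))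
      = (1 + lam) * (u (t - h) - u t) + f t"
  proof -
    have e1: "exp (- lam * (t - h)) = exp (- lam * t) * exp (lam * h)"
      by (simp only: mult_exp_exp) (simp add: algebra_simps)
    have "(1 + lam) * u (t - h) = p * \<psi> (t - h) * exp (- lam * t)"
      unfolding u_def e1 pe2 by (simp add: algebra_simps)
    then show ?thesis unfolding u_def f_def by (simp add: algebra_simps)
  qed
  ultimately show ?thesis by simp
qed

lemma cu: "continuous_on UNIV u"
  using du by (meson DERIV_continuous continuous_at_imp_continuous_on)

lemma fb0: assumes "\<psi> (\<tau> - h) \<le> e" shows "\<bar>f \<tau>\<bar> \<le> C * \<psi> (\<tau> - h) ^ 2 * exp (- lam * \<tau>)"
proof -
  have "\<bar>g (\<psi> (\<tau> - h)) - p * \<psi> (\<tau> - h)\<bar> \<le> C * \<psi> (\<tau> - h) ^ 2"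
    using gq[of "\<psi> (\<tau> - h)"] assms psi_nn by simp
  then show ?thesis unfolding f_def by (simp add: abs_mult mult_right_mono)
qed

lemma ee: "exp (lam * (\<tau> - h)) * exp (- lam * \<tau>) = exp (- lam * h)"
  by (simp only: mult_exp_exp) (simp add: algebra_simps)

lemma fb1: assumes "\<psi> (\<tau> - h) \<le> e" shows "\<bar>f \<tau>\<bar> \<le> C * exp (- lam * h) * \<psi> (\<tau> - h) * u (\<tau> - h)"
proof -
  have P: "\<psi> (\<tau> - h) = u (\<tau> - h) * exp (lam * (\<tau> - h))" by (rule psi_u)
  have "C * \<psi> (\<tau> - h) ^ 2 * exp (- lam * \<tau>) = C * \<psi> (\<tau> - h) * u (\<tau> - h) * (exp (lam * (\<tau> - h)) * exp (- lam * \<tau>))"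
    by (simp add: P power2_eq_square mult_ac)
  also have "\<dots> = C * \<psi> (\<tau> - h) * u (\<tau> - h) * exp (- lam * h)" by (simp only: ee)
  also have "\<dots> = C * exp (- lam * h) * \<psi> (\<tau> - h) * u (\<tau> - h)" by (simp only: mult_ac)
  finally show ?thesis using fb0[OF assms] by linarith
qed

lemma fb2: assumes "\<psi> (\<tau> - h) \<le> e" shows "\<bar>f \<tau>\<bar> \<le> C * exp (- lam * h) * u (\<tau> - h) ^ 2 * exp (lam * (\<tau> - h))"
proof -
  have P: "\<psi> (\<tau> - h) = u (\<tau> - h) * exp (lam * (\<tau> - h))" by (rule psi_u)
  have "C * \<psi> (\<tau> - h) ^ 2 * exp (- lam * \<tau>) = C * u (\<tau> - h) ^ 2 * exp (lam * (\<tau> - h)) * (exp (lam * (\<tau> - h)) * exp (- lam * \<tau>))"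
    by (simp add: P power2_eq_square mult_ac)
  also have "\<dots> = C * u (\<tau> - h) ^ 2 * exp (lam * (\<tau> - h)) * exp (- lam * h)" by (simp only: ee)
  also have "\<dots> = C * exp (- lam * h) * u (\<tau> - h) ^ 2 * exp (lam * (\<tau> - h))" by (simp only: mult_ac)
  finally show ?thesis using fb0[OF assms] by linarith
qed

end

context dde begin

lemma u_bounded: "\<exists>T1 Bw. \<forall>t\<le>T1. u t \<le> Bw \<and> \<psi> t \<le> e"
proof -
  obtain U where U: "\<And>t. (U has_real_derivative u t) (at t)" using global_antideriv[OF cu] by blast
  have dUs: "((\<lambda>t. U (t - h)) has_real_derivative u (t - h)) (at t)" for t
  proof -
    have "((\<lambda>t. U (t - h)) has_real_derivative u (t - h) * 1) (at t)"
      by (rule DERIV_chain2[OF U]) (auto intro!: derivative_eq_intros)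
    then show ?thesis by simp
  qed
  define w where "w t = u t + (1 + lam) * (U t - U (t - h))" for t
  have dw: "(w has_real_derivative f t) (at t)" for t
  proof -
    have "(w has_real_derivative ((1 + lam) * (u (t - h) - u t) + f t) + (1 + lam) * (u t - u (t - h))) (at t)"
      unfolding w_def by (auto intro!: derivative_eq_intros du U dUs)
    then show ?thesis by (simp add: algebra_simps)
  qed
  have cw: "continuous_on UNIV w" using dw by (meson DERIV_continuous continuous_at_imp_continuous_on)
  have Umono: "U t - U (t - h) \<ge> 0" for t
  proof -
    have "U (t - h) \<le> U t"
    proof (rule DERIV_nonneg_imp_nondecreasing[of "t - h" t U])
      show "t - h \<le> t" using h by simp
      fix x show "\<exists>y. DERIV U x :> y \<and> y \<ge> 0" using U u_nn by blast
    qed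
    then show ?thesis by simp
  qed
  have uw: "u t \<le> w t" for t unfolding w_def using Umono[of t] lam by simp
  have aUw: "(1 + lam) * (U t - U (t - h)) \<le> w t" for t unfolding w_def using u_nn[of t] by simp
  have w_nn: "w t \<ge> 0" for t using uw[of t] u_nn[of t] by simp
  define \<kappa> where "\<kappa> = lam / 4"
  have kap: "\<kappa> > 0" using lam by (simp add: \<kappa>_def)
  define \<eta>0 where "\<eta>0 = (1 + lam) * (1 - exp (- \<kappa> * h))"
  have eta0: "\<eta>0 > 0" using lam kap h by (simp add: \<eta>0_def)
  define CE where "CE = C * exp (- lam * h)"
  have CE: "CE \<ge> 0" using C by (simp add: CE_def)
  define \<epsilon>1 where "\<epsilon>1 = min e (\<eta>0 / (CE + 1))"
  have eps1: "\<epsilon>1 > 0" "\<epsilon>1 \<le> e" using e eta0 CE by (auto simp: \<epsilon>1_def)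
  obtain T1 where T1: "\<And>t. t \<le> T1 \<Longrightarrow> \<psi> t \<le> \<epsilon>1" using small[OF eps1(1)] by blast
  define \<eta> where "\<eta> = CE * \<epsilon>1"
  have eta: "\<eta> \<le> \<eta>0" "\<eta> \<ge> 0"
  proof -
    have "\<eta> \<le> CE * (\<eta>0 / (CE + 1))" unfolding \<eta>_def using CE by (intro mult_left_mono) (auto simp: \<epsilon>1_def)
    also have "\<dots> \<le> \<eta>0" using CE eta0 by (simp add: field_simps)
    finally show "\<eta> \<le> \<eta>0" .
    show "\<eta> \<ge> 0" using CE eps1 by (simp add: \<eta>_def)
  qed
  have Bc: "w s * exp (- \<kappa> * h) \<le> w (s + h)" if s: "s \<le> T1" for s
  proof -
    define k where "k \<tau> = w \<tau> + \<eta> * U (\<tau> - h)" for \<tau>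
    have "k s \<le> k (s + h)"
    proof (rule DERIV_nonneg_imp_nondecreasing[of s "s + h" k])
      show "s \<le> s + h" using h by simp
    next
      fix \<tau> assume \<tau>: "s \<le> \<tau>" "\<tau> \<le> s + h"
      have dk: "(k has_real_derivative f \<tau> + \<eta> * u (\<tau> - h)) (at \<tau>)"
        unfolding k_def by (auto intro!: derivative_eq_intros dw dUs)
      have ps: "\<psi> (\<tau> - h) \<le> \<epsilon>1" using T1 \<tau> s by simp
      have "\<bar>f \<tau>\<bar> \<le> CE * \<psi> (\<tau> - h) * u (\<tau> - h)"
        using fb1[of \<tau>] ps eps1 unfolding CE_def by simp
      also have "\<dots> \<le> CE * \<epsilon>1 * u (\<tau> - h)"
        using ps CE u_nn by (intro mult_right_mono mult_left_mono) auto
      finally have "f \<tau> + \<eta> * u (\<tau> - h) \<ge> 0" unfolding \<eta>_def by linarith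
      then show "\<exists>y. DERIV k \<tau> :> y \<and> y \<ge> 0" using dk by blast
    qed
    then have "w s \<le> w (s + h) + \<eta> * (U s - U (s - h))" unfolding k_def by (simp add: algebra_simps)
    also have "\<eta> * (U s - U (s - h)) \<le> \<eta>0 * (U s - U (s - h))"
      using eta Umono[of s] by (intro mult_right_mono) auto
    also have "\<eta>0 * (U s - U (s - h)) = (1 - exp (- \<kappa> * h)) * ((1 + lam) * (U s - U (s - h)))"
      unfolding \<eta>0_def by simp
    also have "\<dots> \<le> (1 - exp (- \<kappa> * h)) * w s"
      using aUw[of s] kap h by (intro mult_left_mono) auto
    finally show ?thesis by (simp add: algebra_simps)
  qed
  define P where "P s = w s * exp (\<kappa> * s)" for s
  have cP: "continuous_on UNIV P" unfolding P_def
    by (rule continuous_on_mult[OF cw]) (intro continuous_intros)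
  obtain MP where MP0': "\<forall>x\<in>P ` {T1..T1 + h}. x \<le> MP"
    using win_bdd(1)[OF cP, of T1 "T1 + h"] unfolding bdd_above_def by blast
  have MP: "\<And>s. s \<in> {T1..T1 + h} \<Longrightarrow> P s \<le> MP" using MP0' by blast
  have Pstep: "P s \<le> P (s + h)" if "s \<le> T1" for s
  proof -
    have ex: "exp (- \<kappa> * h) * exp (\<kappa> * (s + h)) = exp (\<kappa> * s)"
      by (simp only: mult_exp_exp) (simp add: algebra_simps)
    have "P s = w s * exp (- \<kappa> * h) * exp (\<kappa> * (s + h))"
      unfolding P_def by (simp only: mult.assoc ex)
    also have "\<dots> \<le> w (s + h) * exp (\<kappa> * (s + h))"
      using Bc[OF that] by (intro mult_right_mono) auto
    finally show ?thesis unfolding P_def .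
  qed
  have Pind: "\<forall>s. T1 - real n * h \<le> s \<longrightarrow> s \<le> T1 + h \<longrightarrow> P s \<le> MP" for n
  proof (induction n)
    case 0
    then show ?case using MP by simp
  next
    case (Suc n)
    show ?case
    proof (intro allI impI)
      fix s assume s: "T1 - real (Suc n) * h \<le> s" "s \<le> T1 + h"
      show "P s \<le> MP"
      proof (cases "T1 - real n * h \<le> s")
        case True then show ?thesis using Suc s by blast
      next
        case False
        have "real n * h \<ge> 0" using h by simp
        then have "s \<le> T1" using False by linarith
        moreover have "T1 - real n * h \<le> s + h" "s + h \<le> T1 + h" using s False \<open>s \<le> T1\<close> by (auto simp: algebra_simps)
        ultimately have "P (s + h) \<le> MP" using Suc by blast
        then show ?thesis using Pstep[OF \<open>s \<le> T1\<close>] by linarith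
      qed
    qed
  qed
  have wexp: "w s \<le> MP * exp (- \<kappa> * s)" if "s \<le> T1 + h" for s
  proof -
    obtain n :: nat where "(T1 - s) / h \<le> real n" using real_arch_simple by blast
    then have "T1 - real n * h \<le> s" using h by (simp add: field_simps)
    then have "P s \<le> MP" using Pind that by blast
    then have m1: "P s * exp (- \<kappa> * s) \<le> MP * exp (- \<kappa> * s)" by (rule mult_right_mono) simp
    have m2: "P s * exp (- \<kappa> * s) = w s"
      unfolding P_def by (simp add: mult.assoc mult_exp_exp)
    from m1 show ?thesis unfolding m2 .
  qed
  have MP0: "MP \<ge> 0"
  proof -
    have "P T1 \<le> MP" using MP[of T1] h by simp
    moreover have "P T1 \<ge> 0" unfolding P_def using w_nn[of T1] by simp
    ultimately show ?thesis by linarith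
  qed
  define C4 where "C4 = CE * MP ^ 2"
  have C4: "C4 \<ge> 0" using CE by (simp add: C4_def)
  have Bf: "\<bar>f \<tau>\<bar> \<le> C4 * exp (lam / 2 * (\<tau> - h))" if \<tau>: "\<tau> \<le> T1" for \<tau>
  proof -
    have ps: "\<psi> (\<tau> - h) \<le> e" using T1[of "\<tau> - h"] \<tau> h eps1 by simp
    have u1: "u (\<tau> - h) \<le> MP * exp (- \<kappa> * (\<tau> - h))"
      using uw[of "\<tau> - h"] wexp[of "\<tau> - h"] \<tau> h by simp
    have u2: "u (\<tau> - h) ^ 2 \<le> (MP * exp (- \<kappa> * (\<tau> - h))) ^ 2"
      by (rule power_mono[OF u1 u_nn])
    have "\<bar>f \<tau>\<bar> \<le> CE * u (\<tau> - h) ^ 2 * exp (lam * (\<tau> - h))"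
      using fb2[OF ps] unfolding CE_def by simp
    also have "\<dots> \<le> CE * (MP * exp (- \<kappa> * (\<tau> - h))) ^ 2 * exp (lam * (\<tau> - h))"
      using u2 CE by (intro mult_right_mono mult_left_mono) auto
    also have "\<dots> = C4 * (exp (- \<kappa> * (\<tau> - h)) ^ 2 * exp (lam * (\<tau> - h)))"
      unfolding C4_def by (simp add: power_mult_distrib mult_ac)
    also have "exp (- \<kappa> * (\<tau> - h)) ^ 2 * exp (lam * (\<tau> - h)) = exp (lam / 2 * (\<tau> - h))"
      unfolding power2_eq_square by (simp only: mult_exp_exp) (simp add: \<kappa>_def algebra_simps)
    finally show ?thesis .
  qed
  define Bw where "Bw = w T1 + (2 * C4 / lam) * exp (lam / 2 * (T1 - h))"
  have "u t \<le> Bw \<and> \<psi> t \<le> e" if t: "t \<le> T1" for t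
  proof
    define k2 where "k2 \<tau> = w \<tau> + (2 * C4 / lam) * exp (lam / 2 * (\<tau> - h))" for \<tau>
    have "k2 t \<le> k2 T1"
    proof (rule DERIV_nonneg_imp_nondecreasing[OF t])
      fix \<tau> assume \<tau>: "t \<le> \<tau>" "\<tau> \<le> T1"
      have dk: "(k2 has_real_derivative f \<tau> + (2 * C4 / lam) * (exp (lam / 2 * (\<tau> - h)) * (lam / 2))) (at \<tau>)"
        unfolding k2_def using lam by (auto intro!: derivative_eq_intros dw)
      have "(2 * C4 / lam) * (exp (lam / 2 * (\<tau> - h)) * (lam / 2)) = C4 * exp (lam / 2 * (\<tau> - h))"
        using lam by (simp add: field_simps)
      then have "f \<tau> + (2 * C4 / lam) * (exp (lam / 2 * (\<tau> - h)) * (lam / 2)) \<ge> 0"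
        using Bf[of \<tau>] \<tau> by linarith
      then show "\<exists>y. DERIV k2 \<tau> :> y \<and> y \<ge> 0" using dk by blast
    qed
    moreover have "(2 * C4 / lam) * exp (lam / 2 * (t - h)) \<ge> 0" using C4 lam by simp
    ultimately have "w t \<le> Bw"
      unfolding k2_def Bw_def by linarith
    then show "u t \<le> Bw" using uw[of t] by simp
    show "\<psi> t \<le> e" using T1[OF t] eps1 by simp
  qed
  then show ?thesis by blast
qed

end

context dde begin

lemma u_conv: "\<exists>c G T. G \<ge> 0 \<and> (\<forall>t\<le>T. \<bar>u t - c\<bar> \<le> G * exp (lam * t) \<and> \<psi> t \<le> e)"
proof -
  obtain T1 Bw where TB: "\<And>t. t \<le> T1 \<Longrightarrow> u t \<le> Bw \<and> \<psi> t \<le> e" using u_bounded by blast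
  have Bw: "Bw \<ge> 0" using TB[of T1] u_nn[of T1] by simp
  define CE where "CE = C * exp (- lam * h)"
  have CE: "CE \<ge> 0" using C by (simp add: CE_def)
  define C3 where "C3 = CE * Bw ^ 2 * exp (- lam * h)"
  have C3: "C3 \<ge> 0" using CE Bw by (simp add: C3_def)
  have fC: "\<bar>f \<tau>\<bar> \<le> C3 * exp (lam * \<tau>)" if \<tau>: "\<tau> \<le> T1" for \<tau>
  proof -
    have th: "\<tau> - h \<le> T1" using \<tau> h by simp
    have "\<bar>f \<tau>\<bar> \<le> CE * u (\<tau> - h) ^ 2 * exp (lam * (\<tau> - h))"
      using fb2[of \<tau>] TB[OF th] unfolding CE_def by simp
    also have "\<dots> \<le> CE * Bw ^ 2 * exp (lam * (\<tau> - h))"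
      using TB[OF th] u_nn CE by (intro mult_right_mono mult_left_mono power_mono) auto
    also have "exp (lam * (\<tau> - h)) = exp (- lam * h) * exp (lam * \<tau>)"
      by (simp only: mult_exp_exp) (simp add: algebra_simps)
    finally show ?thesis by (simp add: C3_def mult_ac)
  qed
  define a where "a = 1 + lam"
  have a: "a > 0" using lam by (simp add: a_def)
  define \<theta> where "\<theta> = 1 - exp (- a * h) / 2"
  define q where "q = exp (- lam * h)"
  have th: "0 < \<theta>" "\<theta> < 1"
  proof -
    have "exp (- a * h) \<le> 1" using a h by simp
    then show "0 < \<theta>" unfolding \<theta>_def by linarith
    show "\<theta> < 1" by (simp add: \<theta>_def)
  qed
  have q: "0 < q" "q \<le> 1" using lam h by (auto simp: q_def)
  have tq: "\<theta> * q < 1"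
  proof -
    have "\<theta> * q \<le> \<theta> * 1" using mult_left_mono[OF q(2)] th by simp
    then show ?thesis using th by linarith
  qed
  define F0 where "F0 = 2 * h * C3 / (1 - \<theta> * q)"
  have F0: "F0 \<ge> 0" using h C3 tq by (simp add: F0_def)
  have dU: "\<And>\<tau>. \<tau> \<in> {s..s+h} \<Longrightarrow> (u has_real_derivative (a * (u (\<tau> - h) - u \<tau>) + f \<tau>)) (at \<tau>)" for s
    using du unfolding a_def by blast
  have osc: "\<bar>u t - u (t - h)\<bar> \<le> F0 * exp (lam * t)" if t: "t \<le> T1" for t
  proof -
    define oc where "oc k = wmax h u (t - real k * h) - wmin h u (t - real k * h)" for k :: nat
    have rec: "oc k \<le> \<theta> * oc (Suc k) + (2 * h * C3 * exp (lam * t)) * q ^ k" for k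
    proof -
      define s where "s = t - real (Suc k) * h"
      have sh: "s + h = t - real k * h" by (simp add: s_def algebra_simps)
      have kh: "real k * h \<ge> 0" using h by simp
      have "wmax h u (s + h) - wmin h u (s + h) \<le> \<theta> * (wmax h u s - wmin h u s) + 2 * h * (C3 * exp (lam * (t - real k * h)))"
        unfolding \<theta>_def
      proof (rule osc_step[OF a h cu dU])
        fix \<tau> assume \<tau>: "\<tau> \<in> {s..s+h}"
        then have "\<tau> \<le> t - real k * h" using sh by simp
        then have "\<tau> \<le> T1" "lam * \<tau> \<le> lam * (t - real k * h)" using t kh lam by (auto intro: mult_left_mono)
        then show "\<bar>f \<tau>\<bar> \<le> C3 * exp (lam * (t - real k * h))"
          using fC[of \<tau>] C3 by (smt (verit) exp_le_cancel_iff mult_left_mono)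
      qed
      moreover have "exp (lam * (t - real k * h)) = exp (lam * t) * q ^ k"
      proof -
        have "exp (lam * (t - real k * h)) = exp (lam * t) * exp (real k * (- lam * h))"
          by (simp only: mult_exp_exp) (simp add: algebra_simps)
        moreover have "exp (real k * (- lam * h)) = exp (- lam * h) ^ k" by (rule exp_of_nat_mult)
        ultimately show ?thesis unfolding q_def by simp
      qed
      ultimately show ?thesis unfolding oc_def s_def sh[unfolded s_def] by (simp add: mult_ac)
    qed
    have bnd: "oc k \<le> Bw" for k
    proof -
      have "wmax h u (t - real k * h) \<le> Bw"
      proof (rule wmax_le)
        show "h \<ge> 0" using h by simp
        fix \<tau> assume \<tau>: "\<tau> \<in> {t - real k * h - h..t - real k * h}"
        have kh: "real k * h \<ge> 0" using h by simp
        have "\<tau> \<le> t - real k * h" using \<tau> by simp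
        then have "\<tau> \<le> T1" using kh t by linarith
        then show "u \<tau> \<le> Bw" using TB by blast
      qed
      moreover have "0 \<le> wmin h u (t - real k * h)"
        by (rule wmin_ge) (use h u_nn in auto)
      ultimately show ?thesis unfolding oc_def by simp
    qed
    have "oc 0 \<le> (2 * h * C3 * exp (lam * t)) / (1 - \<theta> * q)"
      by (rule back_seq[OF th q _ rec bnd]) (use h C3 in simp)
    moreover have "\<bar>u t - u (t - h)\<bar> \<le> oc 0"
    proof -
      have "u t \<le> wmax h u t" "u (t - h) \<le> wmax h u t" "wmin h u t \<le> u t" "wmin h u t \<le> u (t - h)"
        using wmax_ge[OF cu] wmin_le[OF cu] h by auto
      then show ?thesis unfolding oc_def by simp
    qed
    ultimately show ?thesis unfolding F0_def by (simp add: field_simps)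
  qed
  define G where "G = a * F0 + C3"
  have G: "G \<ge> 0" using a F0 C3 by (simp add: G_def)
  have dub: "\<bar>a * (u (t - h) - u t) + f t\<bar> \<le> G * exp (lam * t)" if t: "t \<le> T1" for t
  proof -
    have "\<bar>a * (u (t - h) - u t) + f t\<bar> \<le> a * \<bar>u t - u (t - h)\<bar> + \<bar>f t\<bar>"
    proof -
      have "\<bar>a * (u (t - h) - u t)\<bar> = a * \<bar>u t - u (t - h)\<bar>" using a by (simp add: abs_mult abs_minus_commute)
      then show ?thesis using abs_triangle_ineq[of "a * (u (t - h) - u t)" "f t"] by linarith
    qed
    also have "\<dots> \<le> a * (F0 * exp (lam * t)) + C3 * exp (lam * t)"
      using osc[OF t] fC[OF t] a by (smt (verit) mult_left_mono)
    finally show ?thesis by (simp add: G_def algebra_simps)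
  qed
  define v where "v \<tau> = u \<tau> - (G / lam) * exp (lam * \<tau>)" for \<tau>
  define v2 where "v2 \<tau> = u \<tau> + (G / lam) * exp (lam * \<tau>)" for \<tau>
  have Gl: "(G / lam) * exp (lam * \<tau>) \<ge> 0" for \<tau> using G lam by simp
  have vdec: "v t \<le> v s" if "s \<le> t" "t \<le> T1" for s t
  proof (rule DERIV_nonpos_imp_nonincreasing[of s t v])
    show "s \<le> t" by fact
    fix x assume x: "s \<le> x" "x \<le> t"
    have "(v has_real_derivative (a * (u (x - h) - u x) + f x) - (G / lam) * (exp (lam * x) * lam)) (at x)"
      unfolding v_def a_def using lam by (auto intro!: derivative_eq_intros du)
    moreover have "(a * (u (x - h) - u x) + f x) - (G / lam) * (exp (lam * x) * lam) \<le> 0"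
      using dub[of x] x that lam by (simp add: abs_le_iff)
    ultimately show "\<exists>y. DERIV v x :> y \<and> y \<le> 0" by blast
  qed
  have v2inc: "v2 s \<le> v2 t" if "s \<le> t" "t \<le> T1" for s t
  proof (rule DERIV_nonneg_imp_nondecreasing[of s t v2])
    show "s \<le> t" by fact
    fix x assume x: "s \<le> x" "x \<le> t"
    have "(v2 has_real_derivative (a * (u (x - h) - u x) + f x) + (G / lam) * (exp (lam * x) * lam)) (at x)"
      unfolding v2_def a_def using lam by (auto intro!: derivative_eq_intros du)
    moreover have "(a * (u (x - h) - u x) + f x) + (G / lam) * (exp (lam * x) * lam) \<ge> 0"
      using dub[of x] x that lam by (simp add: abs_le_iff)
    ultimately show "\<exists>y. DERIV v2 x :> y \<and> y \<ge> 0" by blast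
  qed
  define c where "c = Sup (v ` {..T1})"
  have bdd: "bdd_above (v ` {..T1})"
  proof (rule bdd_aboveI[of _ Bw])
    fix x assume "x \<in> v ` {..T1}"
    then obtain \<tau> where \<tau>: "\<tau> \<le> T1" "x = v \<tau>" by auto
    then show "x \<le> Bw" using TB[OF \<tau>(1)] Gl[of \<tau>] unfolding v_def by simp
  qed
  have "\<bar>u t - c\<bar> \<le> (G / lam) * exp (lam * t) \<and> \<psi> t \<le> e" if t: "t \<le> T1" for t
  proof -
    have "v t \<le> c" unfolding c_def by (rule cSUP_upper[OF _ bdd]) (use t in auto)
    moreover have "c \<le> v2 t"
      unfolding c_def
    proof (rule cSUP_least)
      fix s assume s: "s \<in> {..T1}"
      show "v s \<le> v2 t"
      proof (cases "s \<le> t")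
        case True
        then show ?thesis using v2inc[OF True t] Gl[of s] unfolding v_def v2_def by linarith
      next
        case False
        then show ?thesis using vdec[of t s] s Gl[of t] unfolding v_def v2_def by auto
      qed
    qed simp
    ultimately show ?thesis using TB[OF t] unfolding v_def v2_def by (simp add: abs_le_iff)
  qed
  moreover have "G / lam \<ge> 0" using G lam by simp
  ultimately show ?thesis by blast
qed

end

context dde begin

lemma e2: "exp (lam * t) * exp (lam * t) = exp (2 * lam * t)"
  by (simp only: mult_exp_exp) (simp add: algebra_simps)

lemma asym: "\<exists>c>0. \<exists>M T. M \<ge> 0 \<and> (\<forall>t\<le>T. \<bar>\<psi> t - c * exp (lam * t)\<bar> \<le> M * exp (2 * lam * t)
                 \<and> \<bar>deriv \<psi> t - lam * c * exp (lam * t)\<bar> \<le> M * exp (2 * lam * t))"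
proof -
  obtain c G T where G: "G \<ge> 0" and cGT: "\<And>t. t \<le> T \<Longrightarrow> \<bar>u t - c\<bar> \<le> G * exp (lam * t) \<and> \<psi> t \<le> e"
    using u_conv by blast
  have pb: "\<bar>\<psi> t - c * exp (lam * t)\<bar> \<le> G * exp (2 * lam * t)" if t: "t \<le> T" for t
  proof -
    have "\<psi> t - c * exp (lam * t) = (u t - c) * exp (lam * t)" by (simp add: psi_u algebra_simps)
    then have "\<bar>\<psi> t - c * exp (lam * t)\<bar> = \<bar>u t - c\<bar> * exp (lam * t)" by (simp add: abs_mult)
    also have "\<dots> \<le> G * exp (lam * t) * exp (lam * t)"
      using cGT[OF t] by (intro mult_right_mono) auto
    finally show ?thesis using e2[of t] by (simp add: mult.assoc)
  qed
  have c0: "c \<ge> 0"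
  proof (rule ccontr)
    assume "\<not> c \<ge> 0"
    then obtain t where t: "t \<le> T" "G * exp (lam * t) < - c" using exp_small[OF lam G, of "- c" T] by auto
    then have "u t < 0" using cGT[OF t(1)] by (simp add: abs_le_iff)
    then show False using u_nn[of t] by simp
  qed
  have cne: "c \<noteq> 0"
  proof
    assume c: "c = 0"
    define \<epsilon>2 where "\<epsilon>2 = min e (lam / (C + 1))"
    have eps2: "\<epsilon>2 > 0" "\<epsilon>2 \<le> e" using e lam C by (auto simp: \<epsilon>2_def)
    obtain T2 where T2: "\<And>t. t \<le> T2 \<Longrightarrow> \<psi> t \<le> \<epsilon>2" using small[OF eps2(1)] by blast
    define T3 where "T3 = min T T2"
    have Ceps: "C * \<epsilon>2 < lam"
    proof -
      have "C * \<epsilon>2 \<le> C * (lam / (C + 1))" using C by (intro mult_left_mono) (auto simp: \<epsilon>2_def)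
      also have "\<dots> < lam" using C lam by (simp add: field_simps)
      finally show ?thesis .
    qed
    have z: "\<psi> t = 0" if t: "t \<le> T3" for t
    proof (rule kill[where x=\<psi> and \<rho>="\<lambda>t. g (\<psi> (t - h)) - p * \<psi> (t - h)" and \<mu>="2 * lam"
          and T=T3 and \<eta>="C * \<epsilon>2" and C=G and p=p, OF h])
      show "2 * lam > 0" using lam by simp
      show "t \<le> T3" by fact
      show "C * \<epsilon>2 \<ge> 0" using C eps2 by simp
      fix t assume t: "t \<le> T3"
      show "(\<psi> has_real_derivative - \<psi> t + p * \<psi> (t - h) + (g (\<psi> (t - h)) - p * \<psi> (t - h))) (at t)"
        using dpsi[of t] by simp
      have th: "t - h \<le> T2" using t h by (simp add: T3_def)
      have "\<bar>g (\<psi> (t - h)) - p * \<psi> (t - h)\<bar> \<le> C * \<psi> (t - h) ^ 2"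
        using gq[of "\<psi> (t - h)"] T2[OF th] eps2 psi_nn by simp
      also have "\<dots> \<le> C * \<epsilon>2 * \<bar>\<psi> (t - h)\<bar>"
        using T2[OF th] psi_nn[of "t - h"] C
        by (simp add: power2_eq_square mult.assoc mult_left_mono mult_right_mono)
      finally show "\<bar>g (\<psi> (t - h)) - p * \<psi> (t - h)\<bar> \<le> C * \<epsilon>2 * \<bar>\<psi> (t - h)\<bar>" .
      show "\<bar>\<psi> t\<bar> \<le> G * exp (2 * lam * t)" using pb[of t] t c by (simp add: T3_def)
    next
      have "\<bar>p\<bar> * exp (- (2 * lam) * h) = (1 + lam) * exp (- lam * h)"
      proof -
        have "exp (- (2 * lam) * h) = exp (- lam * h) * exp (- lam * h)"
          by (simp only: mult_exp_exp) (simp add: algebra_simps)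
        then show ?thesis using pe p_pos by simp
      qed
      also have "\<dots> \<le> 1 + lam" using lam h by (simp add: mult_le_cancel_left1)
      finally have A: "\<bar>p\<bar> * exp (- (2 * lam) * h) \<le> 1 + lam" .
      have B: "C * \<epsilon>2 * exp (- (2 * lam) * h) \<le> C * \<epsilon>2"
      proof -
        have "exp (- (2 * lam) * h) \<le> 1" using lam h by simp
        moreover have "C * \<epsilon>2 \<ge> 0" using C eps2 by simp
        ultimately show ?thesis using mult_left_mono[of "exp (- (2 * lam) * h)" 1 "C * \<epsilon>2"] by simp
      qed
      show "(\<bar>p\<bar> + C * \<epsilon>2) * exp (- (2 * lam) * h) < 1 + 2 * lam"
        using A B Ceps by (simp add: distrib_right)
    qed
    have "\<psi> t = 0" for t
      using fwd_uniq[where x=\<psi> and y="\<lambda>_. 0" and g=g and T=T3, OF h dpsi] z g0 by simp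
    then have "\<psi> = (\<lambda>_. 0)" by auto
    then have "((\<lambda>_::real. 0::real) \<longlongrightarrow> K) at_top" using psi_top by simp
    then have "K = 0" using tendsto_const tendsto_unique trivial_limit_at_top_linorder by blast
    then show False using K by simp
  qed
  define M where "M = G + p * G + C * (c + G) ^ 2"
  have M: "M \<ge> G" using G p_pos C by (simp add: M_def)
  define T4 where "T4 = min T 0"
  have "\<bar>\<psi> t - c * exp (lam * t)\<bar> \<le> M * exp (2 * lam * t)
                 \<and> \<bar>deriv \<psi> t - lam * c * exp (lam * t)\<bar> \<le> M * exp (2 * lam * t)" if t: "t \<le> T4" for t
  proof
    have tT: "t \<le> T" "t \<le> 0" using t by (auto simp: T4_def)
    show "\<bar>\<psi> t - c * exp (lam * t)\<bar> \<le> M * exp (2 * lam * t)"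
    proof -
      have "G * exp (2 * lam * t) \<le> M * exp (2 * lam * t)" by (rule mult_right_mono[OF M]) simp
      then show ?thesis using pb[OF tT(1)] by linarith
    qed
    have th: "t - h \<le> T" "t - h \<le> 0" using tT h by auto
    have dv: "deriv \<psi> t = - \<psi> t + g (\<psi> (t - h))" by (rule DERIV_imp_deriv[OF dpsi])
    define r where "r = g (\<psi> (t - h)) - p * \<psi> (t - h)"
    have lc: "lam * c * exp (lam * t) = - (c * exp (lam * t)) + p * (c * exp (lam * (t - h)))"
    proof -
      have E: "exp (lam * (t - h)) = exp (lam * t) * exp (- lam * h)"
        by (simp only: mult_exp_exp) (simp add: algebra_simps)
      have "p * (c * exp (lam * (t - h))) = c * exp (lam * t) * (p * exp (- lam * h))"
        unfolding E by (simp only: mult_ac)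
      also have "\<dots> = c * exp (lam * t) * (1 + lam)" by (simp only: pe)
      finally show ?thesis by (simp add: algebra_simps)
    qed
    have eq: "deriv \<psi> t - lam * c * exp (lam * t)
        = - (\<psi> t - c * exp (lam * t)) + p * (\<psi> (t - h) - c * exp (lam * (t - h))) + r"
      unfolding dv lc r_def by (simp add: algebra_simps)
    have e2h: "exp (2 * lam * (t - h)) \<le> exp (2 * lam * t)" using lam h by simp
    have e1h: "exp (2 * lam * (t - h)) \<le> exp (lam * (t - h))" using lam th by (simp add: mult_le_0_iff)
    have b1: "\<bar>\<psi> t - c * exp (lam * t)\<bar> \<le> G * exp (2 * lam * t)" using pb[OF tT(1)] .
    have b2: "\<bar>\<psi> (t - h) - c * exp (lam * (t - h))\<bar> \<le> G * exp (2 * lam * t)"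
      using pb[OF th(1)] mult_left_mono[OF e2h G] by linarith
    have ps: "\<psi> (t - h) \<le> (c + G) * exp (lam * (t - h))"
    proof -
      have "G * exp (2 * lam * (t - h)) \<le> G * exp (lam * (t - h))" by (rule mult_left_mono[OF e1h G])
      then show ?thesis using pb[OF th(1)] by (simp add: abs_le_iff distrib_right)
    qed
    have r: "\<bar>r\<bar> \<le> C * (c + G) ^ 2 * exp (2 * lam * t)"
    proof -
      have "\<bar>r\<bar> \<le> C * \<psi> (t - h) ^ 2"
        using gq[of "\<psi> (t - h)"] cGT[OF th(1)] psi_nn unfolding r_def by simp
      also have "\<dots> \<le> C * ((c + G) * exp (lam * (t - h))) ^ 2"
        using ps psi_nn C by (intro mult_left_mono power_mono) auto
      also have "\<dots> = C * (c + G) ^ 2 * exp (2 * lam * (t - h))"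
        using e2[of "t - h"] by (simp add: power2_eq_square mult_ac)
      also have "\<dots> \<le> C * (c + G) ^ 2 * exp (2 * lam * t)"
        using e2h C by (intro mult_left_mono) auto
      finally show ?thesis .
    qed
    have "\<bar>deriv \<psi> t - lam * c * exp (lam * t)\<bar>
        \<le> \<bar>\<psi> t - c * exp (lam * t)\<bar> + p * \<bar>\<psi> (t - h) - c * exp (lam * (t - h))\<bar> + \<bar>r\<bar>"
    proof -
      have "\<bar>p * (\<psi> (t - h) - c * exp (lam * (t - h)))\<bar> = p * \<bar>\<psi> (t - h) - c * exp (lam * (t - h))\<bar>"
        using p_pos by (simp add: abs_mult)
      then show ?thesis unfolding eq
        using abs_triangle_ineq[of "- (\<psi> t - c * exp (lam * t)) + p * (\<psi> (t - h) - c * exp (lam * (t - h)))" r]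
          abs_triangle_ineq[of "- (\<psi> t - c * exp (lam * t))" "p * (\<psi> (t - h) - c * exp (lam * (t - h)))"]
          abs_minus_commute[of "c * exp (lam * t)" "\<psi> t"]
        by simp
    qed
    also have "\<dots> \<le> G * exp (2 * lam * t) + p * (G * exp (2 * lam * t)) + C * (c + G) ^ 2 * exp (2 * lam * t)"
    proof -
      have "p * \<bar>\<psi> (t - h) - c * exp (lam * (t - h))\<bar> \<le> p * (G * exp (2 * lam * t))"
        by (rule mult_left_mono[OF b2]) (use p_pos in simp)
      then show ?thesis using b1 r by linarith
    qed
    also have "\<dots> = M * exp (2 * lam * t)" by (simp add: M_def algebra_simps)
    finally show "\<bar>deriv \<psi> t - lam * c * exp (lam * t)\<bar> \<le> M * exp (2 * lam * t)" .
  qed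
  moreover have "M \<ge> 0" using M G by simp
  moreover have "c > 0" using c0 cne by simp
  ultimately show ?thesis by blast
qed

end

lemma gbound1:
  fixes g' g'' :: "real \<Rightarrow> real"
  assumes g'_cont: "continuous_on {0..} g'" and p_def: "g' 0 = p" and eps: "\<epsilon> > 0"
    and d: "\<forall>s\<in>{0<..<\<epsilon>}. (g' has_real_derivative g'' s) (at s)"
    and lim: "(g'' \<longlongrightarrow> L) (at_right 0)"
  shows "\<exists>e>0. \<exists>B\<ge>0. \<forall>s\<in>{0..e}. \<bar>g' s - p\<bar> \<le> B * s"
proof -
  have "eventually (\<lambda>x. dist (g'' x) L < 1) (at_right 0)" using tendstoD[OF lim, of 1] by simp
  then obtain b where b: "b > 0" "\<And>y. 0 < y \<Longrightarrow> y < b \<Longrightarrow> dist (g'' y) L < 1"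
    unfolding eventually_at_right_field by auto
  define e where "e = min \<epsilon> b / 2"
  define B where "B = \<bar>L\<bar> + 1"
  have e: "e > 0" "e < \<epsilon>" "e < b" using eps b by (auto simp: e_def)
  have "\<bar>g' s - p\<bar> \<le> B * s" if s: "s \<in> {0..e}" for s
  proof (cases "s = 0")
    case True then show ?thesis using p_def by simp
  next
    case False
    then have s0: "0 < s" using s by simp
    have "\<exists>l z. 0 < z \<and> z < s \<and> DERIV g' z :> l \<and> g' s - g' 0 = (s - 0) * l"
    proof (rule MVT[OF s0])
      show "continuous_on {0..s} g'" by (rule continuous_on_subset[OF g'_cont]) auto
      fix x assume x: "0 < x" "x < s"
      then have "(g' has_real_derivative g'' x) (at x)" using d s e by auto
      then show "g' differentiable (at x)" unfolding real_differentiable_def by blast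
    qed
    then obtain l z where z: "0 < z" "z < s" "DERIV g' z :> l" "g' s - g' 0 = s * l" by auto
    have "DERIV g' z :> g'' z" using d z s e by auto
    then have "l = g'' z" using DERIV_unique z(3) by blast
    moreover have "dist (g'' z) L < 1" using b(2)[of z] z s e by simp
    ultimately have "\<bar>l\<bar> \<le> B" unfolding B_def dist_real_def by linarith
    then have "s * \<bar>l\<bar> \<le> s * B" using s0 by (intro mult_left_mono) auto
    then show ?thesis using z(4) p_def s0 by (simp add: abs_mult mult.commute)
  qed
  moreover have "B \<ge> 0" by (simp add: B_def)
  ultimately show ?thesis using e by blast
qed

lemma gbound2:
  fixes g' g'' :: "real \<Rightarrow> real"
  assumes p_def: "g' 0 = p" and eps: "\<epsilon> > 0"
    and d: "\<forall>s\<in>{0..<\<epsilon>}. (g' has_real_derivative g'' s) (at s within {0..})"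
    and bd: "bounded (g'' ` {0..<\<epsilon>})"
  shows "\<exists>e>0. \<exists>B\<ge>0. \<forall>s\<in>{0..e}. \<bar>g' s - p\<bar> \<le> B * s"
proof -
  obtain B0 where B0': "\<forall>x\<in>{0..<\<epsilon>}. \<bar>g'' x\<bar> \<le> B0"
    using bd unfolding bounded_iff by auto
  have B0: "\<And>x. x \<in> {0..<\<epsilon>} \<Longrightarrow> \<bar>g'' x\<bar> \<le> B0" using B0' by blast
  define B where "B = max B0 0"
  define e where "e = \<epsilon> / 2"
  have e: "e > 0" "e < \<epsilon>" using eps by (auto simp: e_def)
  have "\<bar>g' s - p\<bar> \<le> B * s" if s: "s \<in> {0..e}" for s
  proof -
    have s0: "0 \<le> s" using s by simp
    have "\<exists>z\<in>{0..s}. g' s - g' 0 = (\<lambda>d. d * g'' z) (s - 0)"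
    proof (rule mvt_very_simple[OF s0])
      fix z assume z: "0 \<le> z" "z \<le> s"
      have "(g' has_real_derivative g'' z) (at z within {0..s})"
        by (rule DERIV_subset[of _ _ _ "{0..}"]) (use d z s e in auto)
      then show "(g' has_derivative (\<lambda>d. d * g'' z)) (at z within {0..s})"
        by (simp add: has_field_derivative_def mult_commute_abs)
    qed
    then obtain z where z: "z \<in> {0..s}" "g' s - g' 0 = s * g'' z" by auto
    have "\<bar>g'' z\<bar> \<le> B" using B0[of z] z s e by (auto simp: B_def)
    then have "s * \<bar>g'' z\<bar> \<le> s * B" using s0 by (intro mult_left_mono) auto
    then show ?thesis using z(2) p_def s0 by (simp add: abs_mult mult.commute)
  qed
  moreover have "B \<ge> 0" by (simp add: B_def)
  ultimately show ?thesis using e by blast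
qed


lemma kcond:
  fixes lam h p Ce :: real
  assumes lam: "lam > 0" and h: "h > 0" and pe: "p * exp (- lam * h) = 1 + lam" and p: "p > 0"
    and Ce: "Ce \<ge> 0" "Ce < lam"
  shows "(\<bar>p\<bar> + Ce) * exp (- (2 * lam) * h) < 1 + 2 * lam"
proof -
  have "\<bar>p\<bar> * exp (- (2 * lam) * h) = (1 + lam) * exp (- lam * h)"
  proof -
    have "exp (- (2 * lam) * h) = exp (- lam * h) * exp (- lam * h)"
      by (simp only: mult_exp_exp) (simp add: algebra_simps)
    then show ?thesis using pe p by simp
  qed
  also have "\<dots> \<le> 1 + lam" using lam h by (simp add: mult_le_cancel_left1)
  finally have A: "\<bar>p\<bar> * exp (- (2 * lam) * h) \<le> 1 + lam" .
  have B: "Ce * exp (- (2 * lam) * h) \<le> Ce"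
  proof -
    have "exp (- (2 * lam) * h) \<le> 1" using lam h by simp
    then show ?thesis using mult_left_mono[of "exp (- (2 * lam) * h)" 1 Ce] Ce by simp
  qed
  show ?thesis using A B Ce by (simp add: distrib_right)
qed

lemma shift_bigo:
  fixes F :: "real \<Rightarrow> real"
  assumes c: "c > 0" and lam: "lam > 0" and d: "\<delta> > 0" and M: "M \<ge> 0"
    and b: "\<And>t. t \<le> T \<Longrightarrow> \<bar>F t - A * c * exp (lam * t)\<bar> \<le> M * exp (2 * lam * t)"
  shows "(\<lambda>t. F (t - ln c / lam) - A * exp (lam * t)) \<in> O[at_bot](\<lambda>t. exp ((2 * lam - \<delta>) * t))"
proof (rule bigoI)
  define t0 where "t0 = ln c / lam"
  have "\<forall>t\<le>min (T + t0) 0. norm (F (t - ln c / lam) - A * exp (lam * t)) \<le> (M / c ^ 2) * norm (exp ((2 * lam - \<delta>) * t))"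
  proof (intro allI impI)
    fix t assume t: "t \<le> min (T + t0) 0"
    have tT: "t - t0 \<le> T" using t by simp
    have E1: "c * exp (lam * (t - t0)) = exp (lam * t)"
    proof -
      have "lam * (t - t0) = lam * t - ln c" using lam by (simp add: t0_def algebra_simps)
      then have "exp (lam * (t - t0)) = exp (lam * t) / c" using c by (simp add: exp_diff)
      then show ?thesis using c by simp
    qed
    have E2: "exp (2 * lam * (t - t0)) = exp (2 * lam * t) / c ^ 2"
    proof -
      have "2 * lam * (t - t0) = 2 * lam * t - 2 * ln c" using lam by (simp add: t0_def algebra_simps)
      moreover have "exp (2 * ln c) = c ^ 2" using c by (simp add: exp_of_nat_mult[of 2, simplified] )
      ultimately show ?thesis by (simp add: exp_diff)
    qed
    have "\<bar>F (t - t0) - A * exp (lam * t)\<bar> \<le> M * exp (2 * lam * (t - t0))"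
      using b[OF tT] E1 by (simp add: mult.assoc)
    also have "\<dots> = (M / c ^ 2) * exp (2 * lam * t)" using E2 by simp
    also have "\<dots> \<le> (M / c ^ 2) * exp ((2 * lam - \<delta>) * t)"
      using t d M c by (intro mult_left_mono) (auto simp: algebra_simps mult_le_0_iff)
    finally show "norm (F (t - ln c / lam) - A * exp (lam * t)) \<le> (M / c ^ 2) * norm (exp ((2 * lam - \<delta>) * t))"
      by (simp add: t0_def)
  qed
  then show "\<forall>\<^sub>F t in at_bot. norm (F (t - ln c / lam) - A * exp (lam * t)) \<le> (M / c ^ 2) * norm (exp ((2 * lam - \<delta>) * t))"
    unfolding eventually_at_bot_linorder by blast
qed


theorem lemma8:
  fixes g g' \<psi> :: "real \<Rightarrow> real" and h K p lam :: real
  assumes h_pos: "h > 0" and K_pos: "K > 0"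
    and g_deriv: "\<And>x. x \<ge> 0 \<Longrightarrow> (g has_real_derivative g' x) (at x within {0..})"
    and g'_cont: "continuous_on {0..} g'"
    and g_nonneg: "\<And>x. x \<ge> 0 \<Longrightarrow> g x \<ge> 0"
    and g0: "g 0 = 0" and gK: "g K = K"
    and p_def: "g' 0 = p" and p_gt: "p > 1"
    and sol: "connecting_solution g h K \<psi>"
    and lam_pos: "lam > 0" and lam_root: "lam = -1 + p * exp (- lam * h)"
  shows
    "((\<exists>\<epsilon>>0. \<exists>g''. (\<forall>s\<in>{0<..<\<epsilon>}. (g' has_real_derivative g'' s) (at s)) \<and>
                  (\<exists>L. (g'' \<longlongrightarrow> L) (at_right 0)))
      \<longrightarrow> (\<forall>\<delta>>0. \<exists>t0.
             (\<lambda>t. \<psi> (t - t0) - exp (lam * t)) \<in> O[at_bot](\<lambda>t. exp ((2 * lam - \<delta>) * t)) \<and>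
             (\<lambda>t. deriv \<psi> (t - t0) - lam * exp (lam * t)) \<in> O[at_bot](\<lambda>t. exp ((2 * lam - \<delta>) * t)))
          \<and> (\<exists>T. \<forall>t\<le>T. deriv \<psi> t > 0))
     \<and>
     ((\<exists>\<epsilon>>0. \<exists>g''. (\<forall>s\<in>{0..<\<epsilon>}. (g' has_real_derivative g'' s) (at s within {0..})) \<and>
                  bounded (g'' ` {0..<\<epsilon>}))
      \<longrightarrow> (\<forall>\<phi>. connecting_solution g h K \<phi> \<longrightarrow> (\<exists>c. \<forall>t. \<phi> t = \<psi> (t + c))))"
proof -
  have gc: "continuous_on {0..} g"
    unfolding continuous_on_eq_continuous_within
    using g_deriv DERIV_continuous by fastforce
  have mk: "dde g \<phi> h K p lam B e"
    if conn: "connecting_solution g h K \<phi>" and e: "e > 0" and B: "B \<ge> 0"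
      and gb: "\<forall>s\<in>{0..e}. \<bar>g' s - p\<bar> \<le> B * s" for \<phi> B e
  proof -
    have gq: "\<bar>g x - p * x\<bar> \<le> B * x ^ 2" if x: "x \<in> {0..e}" for x
      using g_lip[OF g_deriv, of e p B x 0] gb x e B g0 by (simp add: power2_eq_square)
    show ?thesis unfolding dde_def using h_pos K_pos gc g0 conn lam_pos lam_root e B gq by blast
  qed
  have part1: "(\<forall>\<delta>>0. \<exists>t0.
             (\<lambda>t. \<psi> (t - t0) - exp (lam * t)) \<in> O[at_bot](\<lambda>t. exp ((2 * lam - \<delta>) * t)) \<and>
             (\<lambda>t. deriv \<psi> (t - t0) - lam * exp (lam * t)) \<in> O[at_bot](\<lambda>t. exp ((2 * lam - \<delta>) * t)))
          \<and> (\<exists>T. \<forall>t\<le>T. deriv \<psi> t > 0)"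
    if gb: "\<exists>e>0. \<exists>B\<ge>0. \<forall>s\<in>{0..e}. \<bar>g' s - p\<bar> \<le> B * s"
  proof -
    obtain e B where eB: "e > 0" "B \<ge> 0" "\<forall>s\<in>{0..e}. \<bar>g' s - p\<bar> \<le> B * s" using gb by blast
    interpret P: dde g \<psi> h K p lam B e by (rule mk[OF sol eB])
    obtain c M T where c: "c > 0" and M: "M \<ge> 0"
      and cMT: "\<And>t. t \<le> T \<Longrightarrow> \<bar>\<psi> t - c * exp (lam * t)\<bar> \<le> M * exp (2 * lam * t)
                 \<and> \<bar>deriv \<psi> t - lam * c * exp (lam * t)\<bar> \<le> M * exp (2 * lam * t)"
      using P.asym by blast
    have A: "\<forall>\<delta>>0. \<exists>t0.
             (\<lambda>t. \<psi> (t - t0) - exp (lam * t)) \<in> O[at_bot](\<lambda>t. exp ((2 * lam - \<delta>) * t)) \<and>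
             (\<lambda>t. deriv \<psi> (t - t0) - lam * exp (lam * t)) \<in> O[at_bot](\<lambda>t. exp ((2 * lam - \<delta>) * t))"
    proof (intro allI impI)
      fix \<delta> :: real assume d: "\<delta> > 0"
      have b1: "\<bar>\<psi> t - 1 * c * exp (lam * t)\<bar> \<le> M * exp (2 * lam * t)" if "t \<le> T" for t
        using cMT[OF that] by simp
      have b2: "\<bar>deriv \<psi> t - lam * c * exp (lam * t)\<bar> \<le> M * exp (2 * lam * t)" if "t \<le> T" for t
        using cMT[OF that] by simp
      show "\<exists>t0. (\<lambda>t. \<psi> (t - t0) - exp (lam * t)) \<in> O[at_bot](\<lambda>t. exp ((2 * lam - \<delta>) * t)) \<and>
             (\<lambda>t. deriv \<psi> (t - t0) - lam * exp (lam * t)) \<in> O[at_bot](\<lambda>t. exp ((2 * lam - \<delta>) * t))"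
        using shift_bigo[where T=T, OF c lam_pos d M b1] shift_bigo[where T=T, OF c lam_pos d M b2] by auto
    qed
    obtain t1 where t1: "t1 \<le> T" "M * exp (lam * t1) < lam * c"
      using exp_small[OF lam_pos M, of "lam * c" T] c lam_pos by auto
    have "deriv \<psi> t > 0" if t: "t \<le> t1" for t
    proof -
      have "M * exp (lam * t) \<le> M * exp (lam * t1)" using t lam_pos M by (intro mult_left_mono) auto
      then have "lam * c - M * exp (lam * t) > 0" using t1 by linarith
      then have "exp (lam * t) * (lam * c - M * exp (lam * t)) > 0" by simp
      moreover have "exp (lam * t) * (lam * c - M * exp (lam * t)) = lam * c * exp (lam * t) - M * exp (2 * lam * t)"
        using P.e2[of t] by (simp add: algebra_simps)
      ultimately show ?thesis using cMT[of t] t t1 by (simp add: abs_le_iff)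
    qed
    then show ?thesis using A by blast
  qed
  have part2: "\<forall>\<phi>. connecting_solution g h K \<phi> \<longrightarrow> (\<exists>c. \<forall>t. \<phi> t = \<psi> (t + c))"
    if gb: "\<exists>e>0. \<exists>B\<ge>0. \<forall>s\<in>{0..e}. \<bar>g' s - p\<bar> \<le> B * s"
  proof (intro allI impI)
    fix \<phi> assume conn: "connecting_solution g h K \<phi>"
    obtain e B where eB: "e > 0" "B \<ge> 0" "\<forall>s\<in>{0..e}. \<bar>g' s - p\<bar> \<le> B * s" using gb by blast
    interpret P: dde g \<psi> h K p lam B e by (rule mk[OF sol eB])
    interpret Q: dde g \<phi> h K p lam B e by (rule mk[OF conn eB])
    obtain c1 M1 T1 where c1: "c1 > 0" and M1: "M1 \<ge> 0"
      and b1: "\<And>t. t \<le> T1 \<Longrightarrow> \<bar>\<psi> t - c1 * exp (lam * t)\<bar> \<le> M1 * exp (2 * lam * t)"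
      using P.asym by blast
    obtain c2 M2 T2 where c2: "c2 > 0" and M2: "M2 \<ge> 0"
      and b2: "\<And>t. t \<le> T2 \<Longrightarrow> \<bar>\<phi> t - c2 * exp (lam * t)\<bar> \<le> M2 * exp (2 * lam * t)"
      using Q.asym by blast
    define \<sigma> where "\<sigma> = (ln c2 - ln c1) / lam"
    have es: "c1 * exp (lam * \<sigma>) = c2"
    proof -
      have "lam * \<sigma> = ln c2 - ln c1" using lam_pos by (simp add: \<sigma>_def)
      then show ?thesis using c1 c2 by (simp add: exp_diff)
    qed
    define \<psi>s where "\<psi>s t = \<psi> (t + \<sigma>)" for t
    have dps: "(\<psi>s has_real_derivative (- \<psi>s t + g (\<psi>s (t - h)))) (at t)" for t
    proof -
      have "((\<lambda>t. \<psi> (t + \<sigma>)) has_real_derivative (- \<psi> (t + \<sigma>) + g (\<psi> (t + \<sigma> - h)))) (at t)"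
        using P.dpsi[of "t + \<sigma>"] by (simp add: DERIV_shift)
      moreover have "t + \<sigma> - h = t - h + \<sigma>" by simp
      ultimately show ?thesis unfolding \<psi>s_def by simp
    qed
    define D where "D t = \<phi> t - \<psi>s t" for t
    define CD where "CD = M2 + M1 * exp (2 * lam * \<sigma>)"
    define T3 where "T3 = min T2 (T1 - \<sigma>)"
    have Db: "\<bar>D t\<bar> \<le> CD * exp (2 * lam * t)" if t: "t \<le> T3" for t
    proof -
      have "\<bar>\<psi> (t + \<sigma>) - c1 * exp (lam * (t + \<sigma>))\<bar> \<le> M1 * exp (2 * lam * (t + \<sigma>))"
        using b1[of "t + \<sigma>"] t by (simp add: T3_def)
      moreover have "c1 * exp (lam * (t + \<sigma>)) = c2 * exp (lam * t)"
      proof -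
        have "exp (lam * (t + \<sigma>)) = exp (lam * t) * exp (lam * \<sigma>)"
          by (simp only: mult_exp_exp) (simp add: algebra_simps)
        then show ?thesis using es by (simp add: mult_ac)
      qed
      moreover have "exp (2 * lam * (t + \<sigma>)) = exp (2 * lam * \<sigma>) * exp (2 * lam * t)"
        by (simp only: mult_exp_exp) (simp add: algebra_simps)
      moreover have "\<bar>\<phi> t - c2 * exp (lam * t)\<bar> \<le> M2 * exp (2 * lam * t)"
        using b2[of t] t by (simp add: T3_def)
      ultimately show ?thesis unfolding D_def \<psi>s_def CD_def
        by (simp add: algebra_simps abs_le_iff)
    qed
    define \<epsilon>2 where "\<epsilon>2 = min e (lam / (B + 1))"
    have eps2: "\<epsilon>2 > 0" "\<epsilon>2 \<le> e" using eB lam_pos by (auto simp: \<epsilon>2_def)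
    obtain Ta where Ta: "\<And>t. t \<le> Ta \<Longrightarrow> \<phi> t \<le> \<epsilon>2" using Q.small[OF eps2(1)] by blast
    obtain Tb where Tb: "\<And>t. t \<le> Tb \<Longrightarrow> \<psi> t \<le> \<epsilon>2" using P.small[OF eps2(1)] by blast
    define T4 where "T4 = min T3 (min Ta (Tb - \<sigma>))"
    have Beps: "B * \<epsilon>2 < lam"
    proof -
      have "B * \<epsilon>2 \<le> B * (lam / (B + 1))" using eB by (intro mult_left_mono) (auto simp: \<epsilon>2_def)
      also have "\<dots> < lam" using eB lam_pos by (simp add: field_simps)
      finally show ?thesis .
    qed
    have z: "D t = 0" if t: "t \<le> T4" for t
    proof (rule kill[where x=D and \<rho>="\<lambda>t. (g (\<phi> (t - h)) - g (\<psi>s (t - h))) - p * D (t - h)" and \<mu>="2 * lam"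
          and T=T4 and \<eta>="B * \<epsilon>2" and C=CD and p=p, OF h_pos])
      show "2 * lam > 0" using lam_pos by simp
      show "t \<le> T4" by fact
      show "B * \<epsilon>2 \<ge> 0" using eB eps2 by simp
      show "(\<bar>p\<bar> + B * \<epsilon>2) * exp (- (2 * lam) * h) < 1 + 2 * lam"
        by (rule kcond[OF lam_pos h_pos P.pe P.p_pos]) (use eB eps2 Beps in auto)
      fix t assume t: "t \<le> T4"
      show "(D has_real_derivative - D t + p * D (t - h) + ((g (\<phi> (t - h)) - g (\<psi>s (t - h))) - p * D (t - h))) (at t)"
      proof -
        have "(D has_real_derivative (- \<phi> t + g (\<phi> (t - h))) - (- \<psi>s t + g (\<psi>s (t - h)))) (at t)"
          unfolding D_def by (auto intro!: derivative_eq_intros Q.dpsi dps)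
        then show ?thesis unfolding D_def by (simp add: algebra_simps)
      qed
      have pa: "\<phi> (t - h) \<le> \<epsilon>2" using Ta[of "t - h"] t h_pos by (simp add: T4_def)
      have pb: "\<psi>s (t - h) \<le> \<epsilon>2" using Tb[of "t - h + \<sigma>"] t h_pos by (simp add: T4_def \<psi>s_def)
      have "\<bar>g (\<phi> (t - h)) - g (\<psi>s (t - h)) - p * (\<phi> (t - h) - \<psi>s (t - h))\<bar>
           \<le> B * max (\<phi> (t - h)) (\<psi>s (t - h)) * \<bar>\<phi> (t - h) - \<psi>s (t - h)\<bar>"
        by (rule g_lip[OF g_deriv, of e p B]) (use eB pa pb eps2 Q.psi_nn P.psi_nn in \<open>auto simp: \<psi>s_def\<close>)
      also have "\<dots> \<le> B * \<epsilon>2 * \<bar>\<phi> (t - h) - \<psi>s (t - h)\<bar>"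
        using pa pb eB by (intro mult_right_mono mult_left_mono) auto
      finally show "\<bar>(g (\<phi> (t - h)) - g (\<psi>s (t - h))) - p * D (t - h)\<bar> \<le> B * \<epsilon>2 * \<bar>D (t - h)\<bar>"
        unfolding D_def by simp
      show "\<bar>D t\<bar> \<le> CD * exp (2 * lam * t)" using Db[of t] t by (simp add: T4_def)
    qed
    have "\<phi> t = \<psi>s t" for t
      by (rule fwd_uniq[where T=T4, OF h_pos Q.dpsi dps]) (use z in \<open>simp add: D_def\<close>)
    then show "\<exists>c. \<forall>t. \<phi> t = \<psi> (t + c)" unfolding \<psi>s_def by blast
  qed
  show ?thesis
  proof
    show "(\<exists>\<epsilon>>0. \<exists>g''. (\<forall>s\<in>{0<..<\<epsilon>}. (g' has_real_derivative g'' s) (at s)) \<and>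
                  (\<exists>L. (g'' \<longlongrightarrow> L) (at_right 0)))
      \<longrightarrow> (\<forall>\<delta>>0. \<exists>t0.
             (\<lambda>t. \<psi> (t - t0) - exp (lam * t)) \<in> O[at_bot](\<lambda>t. exp ((2 * lam - \<delta>) * t)) \<and>
             (\<lambda>t. deriv \<psi> (t - t0) - lam * exp (lam * t)) \<in> O[at_bot](\<lambda>t. exp ((2 * lam - \<delta>) * t)))
          \<and> (\<exists>T. \<forall>t\<le>T. deriv \<psi> t > 0)"
    proof
      assume "\<exists>\<epsilon>>0. \<exists>g''. (\<forall>s\<in>{0<..<\<epsilon>}. (g' has_real_derivative g'' s) (at s)) \<and>
                  (\<exists>L. (g'' \<longlongrightarrow> L) (at_right 0))"
      then obtain \<epsilon> g'' L where "\<epsilon> > 0" "\<forall>s\<in>{0<..<\<epsilon>}. (g' has_real_derivative g'' s) (at s)"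
        "(g'' \<longlongrightarrow> L) (at_right 0)" by blast
      then show "(\<forall>\<delta>>0. \<exists>t0.
             (\<lambda>t. \<psi> (t - t0) - exp (lam * t)) \<in> O[at_bot](\<lambda>t. exp ((2 * lam - \<delta>) * t)) \<and>
             (\<lambda>t. deriv \<psi> (t - t0) - lam * exp (lam * t)) \<in> O[at_bot](\<lambda>t. exp ((2 * lam - \<delta>) * t)))
          \<and> (\<exists>T. \<forall>t\<le>T. deriv \<psi> t > 0)"
        using part1 gbound1[where g'=g' and p=p, OF g'_cont p_def] by blast
    qed
    show "(\<exists>\<epsilon>>0. \<exists>g''. (\<forall>s\<in>{0..<\<epsilon>}. (g' has_real_derivative g'' s) (at s within {0..})) \<and>
                  bounded (g'' ` {0..<\<epsilon>}))
      \<longrightarrow> (\<forall>\<phi>. connecting_solution g h K \<phi> \<longrightarrow> (\<exists>c. \<forall>t. \<phi> t = \<psi> (t + c)))"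
    proof
      assume "\<exists>\<epsilon>>0. \<exists>g''. (\<forall>s\<in>{0..<\<epsilon>}. (g' has_real_derivative g'' s) (at s within {0..})) \<and>
                  bounded (g'' ` {0..<\<epsilon>})"
      then obtain \<epsilon> g'' where "\<epsilon> > 0" "\<forall>s\<in>{0..<\<epsilon>}. (g' has_real_derivative g'' s) (at s within {0..})"
        "bounded (g'' ` {0..<\<epsilon>})" by blast
      then show "\<forall>\<phi>. connecting_solution g h K \<phi> \<longrightarrow> (\<exists>c. \<forall>t. \<phi> t = \<psi> (t + c))"
        using part2 gbound2[where g'=g' and p=p, OF p_def] by blast
    qed
  qed
qed

end
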